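(* Let $s>0$, $0<\sigma_1\le s$ and $r<\mu_1<\mu_2$, and assume $\frac{\mu_1-r}{s^2}\in(0,1]$. Suppose that under $\mathbb{Q}$, $\ln S_T\sim N\big(\ln S_0+(r-\tfrac{s^2}{2})T,\,s^2T\big)$, and let $\mathcal{P}=\{\mathbb{P}^{\mu,\sigma}:\mu_1\le\mu\le\mu_2,\ \sigma_1\le\sigma\le s\}$, where under $\mathbb{P}^{\mu,\sigma}$, $\ln S_T\sim N\big(\ln S_0+(\mu-\tfrac{\sigma^2}{2})T,\,\sigma^2T\big)$. Then: (i) $F_{S_T}^{\mathbb{P}^{\mu_1,s}}\preceq_{\mathbb{F}_{SSD}}F_{S_T}^{\mathbb{P}^{\mu,\sigma}}$ for all $\mu\in[\mu_1,\mu_2]$, $\sigma\in[\sigma_1,s]$; (ii) $\mathbb{P}^*:=\mathbb{P}^{\mu_1,s}$ is a least favorable measure with respect to $\mathbb{F}_{SSD}$, and with $\ell^*=\ell^{\mathbb{P}^{\mu_1,s}}$ the map $x\mapsto F^{\mathbb{P}^*}_{\ell^*}(x)$ is continuous and $1/\ell^*$ has finite variance under $\mathbb{P}^*$; (iii) for every cdf $F_0$ with $\int_0^1(F_0^{-1}(u))^2du<\infty$, $F_0(x)=0$ for $x<0$, and such that $F_0^{-1}\circ F^{\mathbb{P}^*}_{\ell^*}$ is concave, the $\mathbb{F}_{SSD}$-robust cost-efficiency problem for $F_0$ has the $\mathbb{P}^*$-a.s. unique solution $X^*=F_0^{-1}\big(F_{S_T}^{\mathbb{P}^{\mu_1,s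}}(S_T)\big)$.
   Context: Standing setting: fix $T>0$, $r\in\mathbb{R}$, $S_0>0$, and write $\mathbb{R}_+=[0,\infty)$. $S_T:\Omega\to\mathbb{R}_+$ is a random variable, $\mathcal{F}=\sigma(S_T)$ (so a probability measure on $(\Omega,\mathcal{F})$ is determined by the law of $S_T$). The set of payoffs is $\mathcal{X}=\{g(S_T): g:\mathbb{R}_+\to\mathbb{R}_+\text{ measurable}, E_{\mathbb{Q}}[|g(S_T)|]<\infty\}$, and the price of $X\in\mathcal{X}$ is $e^{-rT}E_{\mathbb{Q}}[X]$. For $\mathbb{P}\in\mathcal{P}$, $\ell^{\mathbb{P}}=d\mathbb{P}/d\mathbb{Q}$; $F_X^{\mathbb{P}}$ is the cdf of $X$ under $\mathbb{P}$; for a cdf $F$, $F^{-1}(p)=\inf\{x:F(x)\ge p\}$. For a set $\mathbb{F}$ of measurable functions $\mathbb{R}_+\to\mathbb{R}$ and cdfs $F,G$ on $\mathbb{R}_+$, $F\preceq_{\mathbb{F}}G$ means $\int f\,dF\le\int f\,dG$ for all $f\in\mathbb{F}$ with finite integrals. $\mathbb{F}_{SSD}$ is the set of all non-decreasing concave functions $\mathbb{R}_+\to\mathbb{R}$. A measure $\mathbb{P}^*\in\mathcal{P}$ with $\ell^*=d\mathbb{P}^*/d\mathbb{Q}$ is least favorable w.r.t. $\mathbb{F}$ if $F_{\ell^*}^{\mathbb{P}^*}\preceq_{\mathbb{F}}F_{\ell^*}^{\mathbb{P}}$ for all $\mathbb{P}\in\mathcal{P}$. The $\mathbb{F}$-robust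 cost-efficiency problem for a cdf $F_0$ is $\inf\{e^{-rT}E_{\mathbb{Q}}[X]: X\in\mathcal{X},\ F_0\preceq_{\mathbb{F}}F_X^{\mathbb{P}}\ \forall\mathbb{P}\in\mathcal{P}\}$. *)

theory Defs
  imports "HOL-Probability.Probability"
begin

text \<open>Canonical model: the sample space is the real line with its Borel sets and
  S_T is the identity (all measures below give the set of positive reals probability 1,
  so effectively the sample space is the range (0,oo) of S_T).  A payoff g(S_T) is thus
  a function g :: real => real.\<close>

definition lognormal :: "real \<Rightarrow> real \<Rightarrow> real measure" where
  "lognormal m v = distr (density lborel (normal_density m (sqrt v))) borel exp"

text \<open>Law of S_T when ln S_T ~ N(ln S0 + (mu - sg^2/2) T, sg^2 T).
  Q is model_measure S0 T r s, and P^{mu,sg} is model_measure S0 T mu sg.\<close>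
definition model_measure :: "real \<Rightarrow> real \<Rightarrow> real \<Rightarrow> real \<Rightarrow> real measure" where
  "model_measure S0 T mu sg = lognormal (ln S0 + (mu - sg\<^sup>2 / 2) * T) (sg\<^sup>2 * T)"

definition model_set :: "real \<Rightarrow> real \<Rightarrow> real \<Rightarrow> real \<Rightarrow> real \<Rightarrow> real \<Rightarrow> real measure set" where
  "model_set S0 T mu1 mu2 sigma1 s =
     {model_measure S0 T mu sg | mu sg. mu1 \<le> mu \<and> mu \<le> mu2 \<and> sigma1 \<le> sg \<and> sg \<le> s}"

definition law :: "real measure \<Rightarrow> (real \<Rightarrow> real) \<Rightarrow> real measure" where
  "law P X = distr P borel X"

definition quantile :: "(real \<Rightarrow> real) \<Rightarrow> real \<Rightarrow> real" where
  "quantile F p = Inf {x. p \<le> F x}"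

definition preceq :: "(real \<Rightarrow> real) set \<Rightarrow> real measure \<Rightarrow> real measure \<Rightarrow> bool" where
  "preceq Fs D1 D2 \<longleftrightarrow>
     (\<forall>f\<in>Fs. set_integrable D1 {0..} f \<and> set_integrable D2 {0..} f \<longrightarrow>
        (LINT x:{0..}|D1. f x) \<le> (LINT x:{0..}|D2. f x))"

definition F_SSD :: "(real \<Rightarrow> real) set" where
  "F_SSD = {f. mono_on {0..} f \<and> concave_on {0..} f}"

definition lr :: "real measure \<Rightarrow> real measure \<Rightarrow> real \<Rightarrow> real" where
  "lr Q P x = enn2real (RN_deriv Q P x)"

definition least_favorable ::
  "(real \<Rightarrow> real) set \<Rightarrow> real measure \<Rightarrow> real measure set \<Rightarrow> real measure \<Rightarrow> bool" where
  "least_favorable Fs Q Ps Pstar \<longleftrightarrow> Pstar \<in> Ps \<and>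
     (\<forall>P\<in>Ps. preceq Fs (law Pstar (lr Q Pstar)) (law P (lr Q Pstar)))"

text \<open>Payoffs g(S_T), g : R_+ -> R_+ measurable, Q-integrable (g only matters on the
  range (0,oo) of S_T).\<close>
definition payoffs :: "real measure \<Rightarrow> (real \<Rightarrow> real) set" where
  "payoffs Q = {X. X \<in> borel_measurable borel \<and> (\<forall>x>0. 0 \<le> X x) \<and> integrable Q X}"

definition price :: "real \<Rightarrow> real \<Rightarrow> real measure \<Rightarrow> (real \<Rightarrow> real) \<Rightarrow> real" where
  "price r T Q X = exp (- r * T) * integral\<^sup>L Q X"

definition rce_feasible ::
  "(real \<Rightarrow> real) set \<Rightarrow> real measure \<Rightarrow> real measure set \<Rightarrow> real measure \<Rightarrow> (real \<Rightarrow> real) set" where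
  "rce_feasible Fs Q Ps D0 = {X \<in> payoffs Q. \<forall>P\<in>Ps. preceq Fs D0 (law P X)}"

definition rce_unique_solution ::
  "(real \<Rightarrow> real) set \<Rightarrow> real \<Rightarrow> real \<Rightarrow> real measure \<Rightarrow> real measure set \<Rightarrow> real measure
     \<Rightarrow> real measure \<Rightarrow> (real \<Rightarrow> real) \<Rightarrow> bool" where
  "rce_unique_solution Fs r T Q Ps D0 Pstar Xs \<longleftrightarrow>
     Xs \<in> rce_feasible Fs Q Ps D0 \<and>
     (\<forall>X\<in>rce_feasible Fs Q Ps D0. price r T Q Xs \<le> price r T Q X) \<and>
     (\<forall>X\<in>rce_feasible Fs Q Ps D0. price r T Q X = price r T Q Xs \<longrightarrow> (AE x in Pstar. X x = Xs x))"

end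

theory Submission
  imports Defs
begin


abbreviation NM :: "real \<Rightarrow> real \<Rightarrow> real measure" where
 "NM m \<sigma> \<equiv> density lborel (normal_density m \<sigma>)"

lemma NM_prob: "\<sigma> > 0 \<Longrightarrow> prob_space (NM m \<sigma>)" by (rule prob_space_normal_density)

lemma normal_exp_eq:
  assumes "\<sigma> > 0"
  shows "normal_density m \<sigma> y * exp (c*y) = exp (c*m + c^2*\<sigma>^2/2) * normal_density (m + c*\<sigma>^2) \<sigma> y"
proof -
  have h: "\<sigma>^2 \<noteq> 0" using assms by simp
  have g1: "t \<noteq> 0 \<Longrightarrow> -(A - 2*c*t*d + c^2*t^2)/(2*t) = -A/(2*t) + c*d - c^2*t/2" for t A d :: real
    by (simp add: field_simps power2_eq_square)
  have "(y - (m + c*\<sigma>^2))^2 = (y-m)^2 - 2*c*\<sigma>^2*(y-m) + c^2*(\<sigma>^2)^2" by algebra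
  then have "- ((y - (m + c*\<sigma>^2))^2)/(2*\<sigma>^2) = - ((y-m)^2)/(2*\<sigma>^2) + c*(y-m) - c^2*\<sigma>^2/2"
    using g1[OF h] by simp
  then have e: "- ((y-m)^2)/(2*\<sigma>^2) + c*y = c*m + c^2*\<sigma>^2/2 + (- ((y - (m + c*\<sigma>^2))^2)/(2*\<sigma>^2))"
    by (simp add: algebra_simps)
  have "exp (- ((y-m)^2)/(2*\<sigma>^2)) * exp (c*y) = exp (c*m + c^2*\<sigma>^2/2) * exp (- ((y - (m + c*\<sigma>^2))^2)/(2*\<sigma>^2))"
    by (simp only: exp_add[symmetric] e)
  then show ?thesis unfolding normal_density_def
    by (simp add: ac_simps)
qed

lemma normal_mgf:
  assumes "\<sigma> > 0"
  shows "has_bochner_integral (NM m \<sigma>) (\<lambda>y. exp (c*y)) (exp (c*m + c^2*\<sigma>^2/2))"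
proof -
  have "has_bochner_integral lborel (\<lambda>y. exp (c*m + c^2*\<sigma>^2/2) * normal_density (m + c*\<sigma>^2) \<sigma> y)
         (exp (c*m + c^2*\<sigma>^2/2) * 1)"
    by (intro has_bochner_integral_mult_right) (simp add: has_bochner_integral_iff assms)
  then have "has_bochner_integral lborel (\<lambda>y. normal_density m \<sigma> y *\<^sub>R exp (c*y)) (exp (c*m + c^2*\<sigma>^2/2))"
    using normal_exp_eq[OF assms] by simp
  then show ?thesis
    by (intro has_bochner_integral_density) auto
qed

lemma distributed_std: "distributed (NM 0 1) lborel (\<lambda>x. x) (normal_density 0 1)"
  unfolding distributed_def by (simp add: distr_id2)

lemma NM_affine:
  assumes "\<sigma> > 0"
  shows "distr (NM 0 1) lborel (\<lambda>z. m + \<sigma> * z) = NM m \<sigma>"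
proof -
  interpret prob_space "NM 0 1" by (rule NM_prob) simp
  have "distributed (NM 0 1) lborel (\<lambda>x. m + \<sigma> * x) (normal_density (m + \<sigma> * 0) (\<bar>\<sigma>\<bar> * 1))"
    by (rule normal_density_affine[OF distributed_std]) (use assms in auto)
  then show ?thesis using assms unfolding distributed_def by simp
qed

lemma LN_affine:
  assumes "\<sigma> > 0"
  shows "distr (NM 0 1) borel (\<lambda>z. exp (m + \<sigma> * z)) = distr (NM m \<sigma>) borel exp"
proof -
  have "distr (NM m \<sigma>) borel exp = distr (distr (NM 0 1) lborel (\<lambda>z. m + \<sigma> * z)) borel exp"
    using NM_affine[OF assms] by simp
  also have "\<dots> = distr (NM 0 1) borel (\<lambda>z. exp (m + \<sigma> * z))"
    by (subst distr_distr) (auto simp: comp_def)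
  finally show ?thesis by simp
qed

lemma lognormal_eq:
  assumes "\<sigma> > 0"
  shows "lognormal m (\<sigma>^2) = distr (NM m \<sigma>) borel exp"
  using assms by (simp add: lognormal_def)

lemma LN_ratio:
  assumes "\<sigma>1 > 0" "\<sigma>2 > 0"
  shows "distr (NM m2 \<sigma>2) borel exp =
     density (distr (NM m1 \<sigma>1) borel exp) (\<lambda>x. ennreal (normal_density m2 \<sigma>2 (ln x) / normal_density m1 \<sigma>1 (ln x)))"
proof -
  let ?r = "\<lambda>x. ennreal (normal_density m2 \<sigma>2 (ln x) / normal_density m1 \<sigma>1 (ln x))"
  have "density (distr (NM m1 \<sigma>1) borel exp) ?r = distr (density (NM m1 \<sigma>1) (\<lambda>x. ?r (exp x))) borel exp"
    by (rule density_distr) auto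
  also have "density (NM m1 \<sigma>1) (\<lambda>x. ?r (exp x)) = density lborel (\<lambda>x. ennreal (normal_density m1 \<sigma>1 x) * ?r (exp x))"
    by (rule density_density_eq) auto
  also have "(\<lambda>x. ennreal (normal_density m1 \<sigma>1 x) * ?r (exp x)) = (\<lambda>x. ennreal (normal_density m2 \<sigma>2 x))"
  proof
    fix x
    have "normal_density m1 \<sigma>1 x > 0" using assms by (simp add: normal_density_pos)
    then show "ennreal (normal_density m1 \<sigma>1 x) * ?r (exp x) = ennreal (normal_density m2 \<sigma>2 x)"
      by (simp add: ennreal_mult[symmetric])
  qed
  finally show ?thesis by simp
qed



lemma LN_pair:
  assumes "a > 0" "b > 0"
  shows "distr (NM 0 1 \<Otimes>\<^sub>M NM 0 1) borel (\<lambda>p. exp (m + a * fst p + b * snd p))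
       = distr (NM m (sqrt (a^2+b^2))) borel exp"
proof -
  define G where "G = NM 0 1"
  interpret G: prob_space G unfolding G_def by (rule NM_prob) simp
  interpret P: pair_prob_space G G by unfold_locales
  have sG[simp, measurable_cong]: "sets G = sets borel" by (simp add: G_def)
  have fstG: "distr (G \<Otimes>\<^sub>M G) G fst = G" by (rule G.distr_pair_fst)
  have sndG: "distr (G \<Otimes>\<^sub>M G) G snd = G"
  proof -
    have "distr (G \<Otimes>\<^sub>M G) G snd = distr (distr (G \<Otimes>\<^sub>M G) (G \<Otimes>\<^sub>M G) (\<lambda>(x,y). (y,x))) G snd"
      using P.distr_pair_swap[THEN arg_cong[where f="\<lambda>M. distr M G snd"]] .
    also have "\<dots> = distr (G \<Otimes>\<^sub>M G) G (\<lambda>x. snd ((\<lambda>(x,y). (y,x)) x))"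
      by (subst distr_distr) (auto simp: comp_def)
    also have "\<dots> = distr (G \<Otimes>\<^sub>M G) G fst"
      by (rule distr_cong) (auto simp: split_beta)
    finally show ?thesis using fstG by simp
  qed
  have fstB: "distr (G \<Otimes>\<^sub>M G) borel fst = G"
    using fstG by (subst distr_cong[where L=G]) auto
  have sndB: "distr (G \<Otimes>\<^sub>M G) borel snd = G"
    using sndG by (subst distr_cong[where L=G]) auto
  have ind: "P.indep_var borel fst borel snd"
  proof (subst P.indep_var_distribution_eq, intro conjI)
    show "fst \<in> measurable (G \<Otimes>\<^sub>M G) borel" by measurable
    show "snd \<in> measurable (G \<Otimes>\<^sub>M G) borel" by measurable
    have "distr (G \<Otimes>\<^sub>M G) (borel \<Otimes>\<^sub>M borel) (\<lambda>x. (fst x, snd x)) = distr (G \<Otimes>\<^sub>M G) (borel \<Otimes>\<^sub>M borel) (\<lambda>x. x)"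
      by simp
    also have "\<dots> = G \<Otimes>\<^sub>M G"
      by (rule distr_id2) (intro sets_pair_measure_cong; simp)
    finally show "distr (G \<Otimes>\<^sub>M G) borel fst \<Otimes>\<^sub>M distr (G \<Otimes>\<^sub>M G) borel snd =
        distr (G \<Otimes>\<^sub>M G) (borel \<Otimes>\<^sub>M borel) (\<lambda>x. (fst x, snd x))"
      using fstB sndB by simp
  qed
  have fstL: "distr (G \<Otimes>\<^sub>M G) lborel fst = G"
    using fstG by (subst distr_cong[where L=G]) auto
  have sndL: "distr (G \<Otimes>\<^sub>M G) lborel snd = G"
    using sndG by (subst distr_cong[where L=G]) auto
  have dfst: "distributed (G \<Otimes>\<^sub>M G) lborel fst (normal_density 0 1)"
    unfolding distributed_def using fstL by (simp add: G_def)
  have dsnd: "distributed (G \<Otimes>\<^sub>M G) lborel snd (normal_density 0 1)"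
    unfolding distributed_def using sndL by (simp add: G_def)
  have dX: "distributed (G \<Otimes>\<^sub>M G) lborel (\<lambda>x. m + a * fst x) (normal_density (m + a * 0) (\<bar>a\<bar> * 1))"
    by (rule P.normal_density_affine[OF dfst]) (use assms in auto)
  have dY: "distributed (G \<Otimes>\<^sub>M G) lborel (\<lambda>x. 0 + b * snd x) (normal_density (0 + b * 0) (\<bar>b\<bar> * 1))"
    by (rule P.normal_density_affine[OF dsnd]) (use assms in auto)
  have indXY: "P.indep_var borel ((\<lambda>x. m + a * x) \<circ> fst) borel ((\<lambda>x. 0 + b * x) \<circ> snd)"
    by (rule P.indep_var_compose[OF ind]) auto
  have "distributed (G \<Otimes>\<^sub>M G) lborel (\<lambda>x. (m + a * fst x) + (0 + b * snd x)) (normal_density (m + 0) (sqrt (a\<^sup>2 + b\<^sup>2)))"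
    by (rule P.add_indep_normal[where \<sigma>=a and \<tau>=b]) (use indXY dX dY assms in \<open>auto simp: comp_def\<close>)
  then have d: "distr (G \<Otimes>\<^sub>M G) lborel (\<lambda>x. m + a * fst x + b * snd x) = NM m (sqrt (a^2+b^2))"
    unfolding distributed_def by (simp add: add.assoc)
  have "distr (G \<Otimes>\<^sub>M G) borel (\<lambda>p. exp (m + a * fst p + b * snd p)) =
      distr (distr (G \<Otimes>\<^sub>M G) lborel (\<lambda>x. m + a * fst x + b * snd x)) borel exp"
    by (subst distr_distr) (auto simp: comp_def)
  then show ?thesis using d by (simp add: G_def)
qed



lemma ssd_LN:
  assumes s1: "\<sigma>1 > 0" and s2: "\<sigma>2 > 0" and s12: "\<sigma>2 \<le> \<sigma>1"
    and mm: "m1 + \<sigma>1^2/2 \<le> m2 + \<sigma>2^2/2"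
    and gm: "mono_on {0<..} g" and gc: "concave_on {0<..} g" and gb[measurable]: "g \<in> borel_measurable borel"
    and int1: "integrable (distr (NM m1 \<sigma>1) borel exp) g"
    and int2: "integrable (distr (NM m2 \<sigma>2) borel exp) g"
  shows "integral\<^sup>L (distr (NM m1 \<sigma>1) borel exp) g \<le> integral\<^sup>L (distr (NM m2 \<sigma>2) borel exp) g"
proof -
  define G where "G = NM 0 1"
  interpret G: prob_space G unfolding G_def by (rule NM_prob) simp
  have sG[simp, measurable_cong]: "sets G = sets borel" by (simp add: G_def)
  have L2: "distr (NM m2 \<sigma>2) borel exp = distr G borel (\<lambda>z. exp (m2 + \<sigma>2 * z))"
    using LN_affine[OF s2] by (simp add: G_def)
  have int2': "integrable G (\<lambda>z. g (exp (m2 + \<sigma>2 * z)))"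
    using int2 unfolding L2 by (subst (asm) integrable_distr_eq) auto
  have I2: "integral\<^sup>L (distr (NM m2 \<sigma>2) borel exp) g = (\<integral>z. g (exp (m2 + \<sigma>2 * z)) \<partial>G)"
    unfolding L2 by (subst integral_distr) auto
  show ?thesis
  proof (cases "\<sigma>2 = \<sigma>1")
    case True
    have L1: "distr (NM m1 \<sigma>1) borel exp = distr G borel (\<lambda>z. exp (m1 + \<sigma>2 * z))"
      using LN_affine[OF s1] True by (simp add: G_def)
    have int1': "integrable G (\<lambda>z. g (exp (m1 + \<sigma>2 * z)))"
      using int1 unfolding L1 by (subst (asm) integrable_distr_eq) auto
    have I1: "integral\<^sup>L (distr (NM m1 \<sigma>1) borel exp) g = (\<integral>z. g (exp (m1 + \<sigma>2 * z)) \<partial>G)"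
      unfolding L1 by (subst integral_distr) auto
    have "m1 \<le> m2" using mm True by simp
    then have "g (exp (m1 + \<sigma>2 * z)) \<le> g (exp (m2 + \<sigma>2 * z))" for z
      by (intro mono_onD[OF gm]) auto
    then show ?thesis unfolding I1 I2 by (intro integral_mono int1' int2')
  next
    case False
    then have lt: "\<sigma>2 < \<sigma>1" using s12 by simp
    define b where "b = sqrt (\<sigma>1^2 - \<sigma>2^2)"
    have bpos: "b > 0" unfolding b_def using lt s2 by (simp add: power_strict_mono)
    have b2: "b^2 = \<sigma>1^2 - \<sigma>2^2" unfolding b_def using lt s2
      by (simp add: power_mono)
    have sq: "sqrt (\<sigma>2^2 + b^2) = \<sigma>1" using b2 s1 by simp
    interpret P: pair_prob_space G G by unfold_locales
    define F where "F = (\<lambda>p. g (exp (m1 + \<sigma>2 * fst p + b * snd p)))"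
    have Fm[measurable]: "F \<in> borel_measurable (G \<Otimes>\<^sub>M G)" unfolding F_def by measurable
    have L1: "distr (NM m1 \<sigma>1) borel exp = distr (G \<Otimes>\<^sub>M G) borel (\<lambda>p. exp (m1 + \<sigma>2 * fst p + b * snd p))"
      using LN_pair[OF s2 bpos, of m1] sq by (simp add: G_def)
    have intF: "integrable (G \<Otimes>\<^sub>M G) F"
      using int1 unfolding L1 F_def by (subst (asm) integrable_distr_eq) auto
    have I1: "integral\<^sup>L (distr (NM m1 \<sigma>1) borel exp) g = integral\<^sup>L (G \<Otimes>\<^sub>M G) F"
      unfolding L1 F_def by (subst integral_distr) auto
    also have "\<dots> = (\<integral>z. (\<integral>w. F (z, w) \<partial>G) \<partial>G)"
      by (rule P.integral_fst'[OF intF, symmetric])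
    also have "\<dots> \<le> (\<integral>z. g (exp (m2 + \<sigma>2 * z)) \<partial>G)"
    proof (rule integral_mono_AE)
      show "integrable G (\<lambda>z. \<integral>w. F (z, w) \<partial>G)" by (rule P.integrable_fst'[OF intF])
      show "integrable G (\<lambda>z. g (exp (m2 + \<sigma>2 * z)))" by (rule int2')
      show "AE z in G. (\<integral>w. F (z, w) \<partial>G) \<le> g (exp (m2 + \<sigma>2 * z))"
        using P.AE_integrable_fst'[OF intF]
      proof eventually_elim
        case (elim z)
        define X where "X = (\<lambda>w. exp (m1 + \<sigma>2 * z) * exp (b * w))"
        have hb: "has_bochner_integral G (\<lambda>w. exp (b * w)) (exp (b^2/2))"
          using normal_mgf[of 1 0 b] by (simp add: G_def)
        have hX: "has_bochner_integral G X (exp (m1 + \<sigma>2 * z) * exp (b^2/2))"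
          unfolding X_def by (intro has_bochner_integral_mult_right hb)
        have Xe: "X w = exp (m1 + \<sigma>2 * z + b * w)" for w
          unfolding X_def by (simp add: exp_add)
        have FX: "F (z, w) = g (X w)" for w unfolding F_def Xe by simp
        have intgX: "integrable G (\<lambda>w. g (X w))" using elim FX by simp
        have "(\<lambda>x. - g x) (G.expectation X) \<le> G.expectation (\<lambda>w. (\<lambda>x. - g x) (X w))"
        proof (rule G.jensens_inequality[where I="{0<..}" and a=0])
          show "integrable G X" using hX by (simp add: has_bochner_integral_iff)
          show "AE x in G. X x \<in> {0<..}" by (simp add: X_def)
          show "integrable G (\<lambda>x. - g (X x))" using intgX by simp
          show "convex_on {0<..} (\<lambda>x. - g x)" using gc by (simp add: concave_on_def)
        qed auto
        then have "G.expectation (\<lambda>w. g (X w)) \<le> g (G.expectation X)" by simp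
        also have "G.expectation X = exp (m1 + \<sigma>2 * z + b^2/2)"
          using hX by (simp add: has_bochner_integral_iff exp_add)
        also have "g (exp (m1 + \<sigma>2 * z + b^2/2)) \<le> g (exp (m2 + \<sigma>2 * z))"
          using mm b2 by (intro mono_onD[OF gm]) (auto simp: diff_divide_distrib)
        finally show ?case using FX by simp
      qed
    qed
    finally show ?thesis using I2 by simp
  qed
qed


abbreviation LN :: "real \<Rightarrow> real \<Rightarrow> real measure" where
 "LN m \<sigma> \<equiv> distr (NM m \<sigma>) borel exp"

lemma sets_LN[simp, measurable_cong]: "sets (LN m \<sigma>) = sets borel" by simp
lemma space_LN[simp]: "space (LN m \<sigma>) = UNIV" by simp

lemma LN_prob: "\<sigma> > 0 \<Longrightarrow> prob_space (LN m \<sigma>)"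
  by (rule prob_space.prob_space_distr[OF NM_prob]) auto

lemma LN_real_distribution: "\<sigma> > 0 \<Longrightarrow> real_distribution (LN m \<sigma>)"
  by (rule prob_space.real_distribution_distr[OF NM_prob]) auto

lemma LN_AE_pos: "AE x in LN m \<sigma>. x > 0"
  by (subst AE_distr_iff) auto

lemma emeasure_LN: "A \<in> sets borel \<Longrightarrow> emeasure (LN m \<sigma>) A = emeasure (NM m \<sigma>) (exp -` A)"
  by (subst emeasure_distr) auto

lemma NM_null: "A \<in> null_sets lborel \<Longrightarrow> emeasure (NM m \<sigma>) A = 0"
proof -
  assume A: "A \<in> null_sets lborel"
  then have "AE x\<in>A in lborel. ennreal (normal_density m \<sigma> x) = 0"
    using AE_not_in[OF A] by eventually_elim auto
  then have "A \<in> null_sets (NM m \<sigma>)"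
    using A by (subst null_sets_density_iff) auto
  then show ?thesis by auto
qed

lemma NM_pos:
  assumes "\<sigma> > 0" "a < b" "{a..b} \<subseteq> A" "A \<in> sets borel"
  shows "emeasure (NM m \<sigma>) A > 0"
proof (rule ccontr)
  assume "\<not> emeasure (NM m \<sigma>) A > 0"
  then have "emeasure (NM m \<sigma>) A = 0" by (simp add: zero_less_iff_neq_zero)
  then have "A \<in> null_sets (NM m \<sigma>)" using assms by auto
  then have "AE x\<in>A in lborel. ennreal (normal_density m \<sigma> x) = 0"
    by (subst (asm) null_sets_density_iff) auto
  moreover have "ennreal (normal_density m \<sigma> x) \<noteq> 0" for x
    using normal_density_pos[OF assms(1), of m x] by simp
  ultimately have "AE x in lborel. x \<notin> A"
    by (auto elim: AE_mp)
  then have "emeasure lborel A = 0"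
    using assms by (subst (asm) AE_iff_measurable[of A]) auto
  moreover have "emeasure lborel {a..b} \<le> emeasure lborel A"
    using assms by (intro emeasure_mono) auto
  ultimately show False using assms by simp
qed

lemma LN_singleton: "emeasure (LN m \<sigma>) {x} = 0"
proof -
  have "exp -` {x} \<subseteq> {ln x}" by auto
  then have "countable (exp -` {x})" by (rule countable_subset) simp
  then have "exp -` {x} \<in> null_sets lborel" by (rule countable_imp_null_set_lborel)
  then show ?thesis by (simp add: emeasure_LN NM_null)
qed

lemma LN_nonpos: "emeasure (LN m \<sigma>) {..0} = 0"
proof -
  have "exp -` {..0::real} = {}" using exp_gt_zero by force
  then show ?thesis by (simp add: emeasure_LN)
qed

lemma LN_cdf_bounds:
  assumes "\<sigma> > 0" "x > 0"
  shows "0 < cdf (LN m \<sigma>) x" "cdf (LN m \<sigma>) x < 1"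
proof -
  interpret prob_space "LN m \<sigma>" by (rule LN_prob[OF assms(1)])
  have i1: "exp y \<le> x \<longleftrightarrow> y \<le> ln x" for y using assms by (metis exp_le_cancel_iff exp_ln)
  have i2: "x < exp y \<longleftrightarrow> ln x < y" for y using assms by (metis exp_less_cancel_iff exp_ln)
  have e1: "exp -` {..x} = {..ln x}" using i1 by auto
  have e2: "exp -` {x<..} = {ln x<..}" using i2 by auto
  have "emeasure (LN m \<sigma>) {..x} > 0"
    unfolding emeasure_LN[OF atMost_borel] e1 by (rule NM_pos[OF assms(1), of "ln x - 1" "ln x"]) auto
  then show "0 < cdf (LN m \<sigma>) x" by (simp add: cdf_def emeasure_eq_measure)
  have "emeasure (LN m \<sigma>) {x<..} > 0"
    unfolding emeasure_LN[OF greaterThan_borel] e2 by (rule NM_pos[OF assms(1), of "ln x + 1" "ln x + 2"]) auto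
  then have "prob {x<..} > 0" by (simp add: emeasure_eq_measure)
  moreover have "prob {..x} + prob {x<..} = 1"
  proof -
    have "prob ({..x} \<union> {x<..}) = prob {..x} + prob {x<..}"
      by (rule finite_measure_Union) auto
    moreover have "{..x} \<union> {x<..} = UNIV" by auto
    ultimately show ?thesis using prob_space by simp
  qed
  ultimately show "cdf (LN m \<sigma>) x < 1" by (simp add: cdf_def)
qed

lemma cdf_distr_LN_continuous:
  assumes "\<sigma> > 0" and h[measurable]: "h \<in> borel_measurable borel"
    and inj: "\<And>x y. x > 0 \<Longrightarrow> y > 0 \<Longrightarrow> h x = h y \<Longrightarrow> x = y"
  shows "continuous_on UNIV (cdf (distr (LN m \<sigma>) borel h))"
proof -
  interpret prob_space "LN m \<sigma>" by (rule LN_prob[OF assms(1)])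
  interpret D: real_distribution "distr (LN m \<sigma>) borel h" by (rule real_distribution_distr) simp
  have "isCont (cdf (distr (LN m \<sigma>) borel h)) y" for y
  proof -
    have "emeasure (distr (LN m \<sigma>) borel h) {y} = 0"
    proof (cases "\<exists>z>0. h z = y")
      case True
      then obtain z where z: "z > 0" "h z = y" by auto
      have "h -` {y} \<subseteq> {..0} \<union> {z}"
      proof
        fix x assume "x \<in> h -` {y}"
        then have hx: "h x = y" by simp
        show "x \<in> {..0} \<union> {z}"
        proof (cases "x > 0")
          case True
          then have "x = z" using inj[of x z] z hx by simp
          then show ?thesis by simp
        qed simp
      qed
      then have "emeasure (LN m \<sigma>) (h -` {y}) \<le> emeasure (LN m \<sigma>) ({..0} \<union> {z})"
        by (intro emeasure_mono) auto
      also have "\<dots> \<le> emeasure (LN m \<sigma>) {..0} + emeasure (LN m \<sigma>) {z}"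
        by (intro emeasure_subadditive) auto
      also have "\<dots> = 0" by (simp add: LN_nonpos LN_singleton)
      finally show ?thesis by (subst emeasure_distr) auto
    next
      case False
      have "h -` {y} \<subseteq> {..0}"
      proof
        fix x assume x: "x \<in> h -` {y}"
        show "x \<in> {..0}"
        proof (rule ccontr)
          assume "x \<notin> {..0}"
          then have "x > 0" by simp
          with x False show False by auto
        qed
      qed
      then have "emeasure (LN m \<sigma>) (h -` {y}) \<le> emeasure (LN m \<sigma>) {..0}"
        by (intro emeasure_mono) auto
      then show ?thesis by (subst emeasure_distr) (auto simp: LN_nonpos)
    qed
    then show ?thesis by (simp add: D.isCont_cdf measure_def)
  qed
  then show ?thesis by (simp add: continuous_on_eq_continuous_at)
qed

lemma ratio_same_sigma:
  assumes "\<sigma> > 0" "x > 0"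
  shows "normal_density m2 \<sigma> (ln x) / normal_density m1 \<sigma> (ln x)
       = exp (- (m2^2 - m1^2)/(2*\<sigma>^2)) * x powr ((m2 - m1)/\<sigma>^2)"
proof -
  let ?y = "ln x"
  have h: "\<sigma>^2 \<noteq> 0" using assms by simp
  have e: "- ((?y-m2)^2)/(2*\<sigma>^2) - (- ((?y-m1)^2)/(2*\<sigma>^2)) = - (m2^2 - m1^2)/(2*\<sigma>^2) + ((m2 - m1)/\<sigma>^2) * ?y"
    using h by (simp add: field_simps power2_eq_square)
  have "normal_density m2 \<sigma> ?y / normal_density m1 \<sigma> ?y = exp (- ((?y-m2)^2)/(2*\<sigma>^2)) / exp (- ((?y-m1)^2)/(2*\<sigma>^2))"
    unfolding normal_density_def using assms by simp
  also have "\<dots> = exp (- (m2^2 - m1^2)/(2*\<sigma>^2) + ((m2 - m1)/\<sigma>^2) * ?y)"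
    by (simp only: exp_diff[symmetric] e)
  also have "\<dots> = exp (- (m2^2 - m1^2)/(2*\<sigma>^2)) * x powr ((m2 - m1)/\<sigma>^2)"
    using assms by (simp add: exp_add powr_def)
  finally show ?thesis .
qed

lemma LN_exp_ln_integrable:
  assumes "\<sigma> > 0"
  shows "integrable (LN m \<sigma>) (\<lambda>x. exp (c * ln x))"
proof -
  have "integrable (NM m \<sigma>) (\<lambda>y. exp (c * y))"
    using normal_mgf[OF assms] by (simp add: has_bochner_integral_iff)
  then show ?thesis by (subst integrable_distr_eq) auto
qed


abbreviation Ulb :: "real measure" where
  "Ulb \<equiv> density lborel (indicator {0<..<1})"

lemma lborel_unit_Iic:
  assumes "0 \<le> t" "t \<le> 1"
  shows "emeasure lborel ({0<..<1} \<inter> {..t}) = ennreal t"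
proof (cases "t < 1")
  case True
  then have "{0<..<1} \<inter> {..t} = {0<..t}" by auto
  then show ?thesis using assms by simp
next
  case False
  then have "t = 1" using assms by simp
  moreover have "{0<..<1::real} \<inter> {..1} = {0<..<1}" by auto
  ultimately show ?thesis by simp
qed

lemma Ulb_emeasure: "A \<in> sets borel \<Longrightarrow> emeasure Ulb A = emeasure lborel ({0<..<1} \<inter> A)"
  by (subst emeasure_restricted) auto

lemma Ulb_prob: "prob_space Ulb"
  by (rule prob_spaceI) (simp add: Ulb_emeasure[of UNIV, simplified])

lemma Ulb_real_distribution: "real_distribution Ulb"
  unfolding real_distribution_def real_distribution_axioms_def using Ulb_prob by simp

lemma cdf_Ulb: "0 \<le> t \<Longrightarrow> t \<le> 1 \<Longrightarrow> cdf Ulb t = t"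
  unfolding cdf_def measure_def by (simp add: Ulb_emeasure lborel_unit_Iic)

lemma cdf_Ulb_neg: "t < 0 \<Longrightarrow> cdf Ulb t = 0"
proof -
  assume "t < 0"
  then have "{0<..<1::real} \<inter> {..t} = {}" by auto
  then show ?thesis unfolding cdf_def measure_def by (simp add: Ulb_emeasure)
qed

lemma cdf_Ulb_ge1: "1 \<le> t \<Longrightarrow> cdf Ulb t = 1"
proof -
  assume "1 \<le> t"
  then have "{0<..<1::real} \<inter> {..t} = {0<..<1}" by auto
  then show ?thesis unfolding cdf_def measure_def by (simp add: Ulb_emeasure)
qed

context real_distribution
begin

lemma quantile_le_iff:
  assumes "0 < u" "u < 1"
  shows "quantile (cdf M) u \<le> x \<longleftrightarrow> u \<le> cdf M x"
proof -
  define S where "S = {x. u \<le> cdf M x}"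
  have "eventually (\<lambda>x. u < cdf M x) at_top"
    using cdf_lim_at_top_prob assms(2) by (rule order_tendstoD)
  then obtain N where N: "\<And>x. x \<ge> N \<Longrightarrow> u < cdf M x" by (auto simp: eventually_at_top_linorder)
  then have ne: "S \<noteq> {}" unfolding S_def by (metis less_imp_le mem_Collect_eq order_refl empty_iff)
  have "eventually (\<lambda>x. cdf M x < u) at_bot"
    using cdf_lim_at_bot assms(1) by (rule order_tendstoD)
  then obtain L where L: "\<And>x. x \<le> L \<Longrightarrow> cdf M x < u" by (auto simp: eventually_at_bot_linorder)
  have Lx: "L \<le> x" if "x \<in> S" for x
  proof (rule ccontr)
    assume "\<not> L \<le> x"
    then have "cdf M x < u" by (intro L) simp
    with that show False by (simp add: S_def)
  qed
  have bdd: "bdd_below S" by (rule bdd_belowI[of S L]) (rule Lx)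
  have q: "quantile (cdf M) u = Inf S" by (simp add: quantile_def S_def)
  show ?thesis
  proof
    assume "u \<le> cdf M x"
    then have "x \<in> S" by (simp add: S_def)
    then show "quantile (cdf M) u \<le> x" unfolding q by (rule cInf_lower[OF _ bdd])
  next
    assume qx: "quantile (cdf M) u \<le> x"
    have ge: "u \<le> cdf M y" if "y > x" for y
    proof -
      have "Inf S < y" using qx that q by simp
      then obtain s where "s \<in> S" "s < y" using cInf_lessD[OF ne] by blast
      then show ?thesis unfolding S_def using cdf_nondecreasing[of s y] by simp
    qed
    have "(cdf M \<longlongrightarrow> cdf M x) (at_right x)"
      using cdf_is_right_cont[of x] by (simp add: continuous_within)
    moreover have "eventually (\<lambda>y. u \<le> cdf M y) (at_right x)"
      using eventually_at_right_less[of x] by (rule eventually_mono) (rule ge)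
    ultimately show "u \<le> cdf M x" by (rule tendsto_lowerbound) simp
  qed
qed

lemma quantile_mono:
  assumes "0 < u" "u \<le> v" "v < 1"
  shows "quantile (cdf M) u \<le> quantile (cdf M) v"
proof -
  have "v \<le> cdf M (quantile (cdf M) v)" using quantile_le_iff[of v "quantile (cdf M) v"] assms by simp
  then have "u \<le> cdf M (quantile (cdf M) v)" using assms by simp
  then show ?thesis using quantile_le_iff[of u "quantile (cdf M) v"] assms by simp
qed

lemma quantile_nonneg:
  assumes "\<And>x. x < 0 \<Longrightarrow> cdf M x = 0" "0 < u" "u < 1"
  shows "0 \<le> quantile (cdf M) u"
proof (rule ccontr)
  assume "\<not> 0 \<le> quantile (cdf M) u"
  then have "quantile (cdf M) u < 0" by simp
  moreover have "u \<le> cdf M (quantile (cdf M) u)" using quantile_le_iff[of u "quantile (cdf M) u"] assms by simp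
  ultimately show False using assms by simp
qed

lemma quantile_measurable[measurable]: "quantile (cdf M) \<in> borel_measurable borel"
proof (rule borel_measurable_piecewise_mono[of "{{..0}, {0<..<1}, {1}, {1<..}}"])
  show "countable {{..0}, {0<..<1}, {1::real}, {1<..}}" by simp
  show "\<Union> {{..0}, {0<..<1}, {1::real}, {1<..}} = UNIV" by auto
  fix c assume c: "c \<in> {{..0}, {0<..<1}, {1::real}, {1<..}}"
  then show "c \<in> sets borel" by auto
  have m1: "mono_on {..0} (quantile (cdf M))"
  proof -
    have "{x. u \<le> cdf M x} = UNIV" if "u \<le> 0" for u using that cdf_nonneg[of ] by (auto intro: order_trans)
    then show ?thesis unfolding quantile_def by (auto intro!: mono_onI)
  qed
  have m2: "mono_on {0<..<1} (quantile (cdf M))"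
    by (rule mono_onI) (auto intro: quantile_mono)
  have m3: "mono_on {1<..} (quantile (cdf M))"
  proof -
    have "{x. u \<le> cdf M x} = {}" if "1 < u" for u
    proof -
      have "\<not> u \<le> cdf M x" for x using cdf_bounded_prob[of x] that by simp
      then show ?thesis by auto
    qed
    then show ?thesis unfolding quantile_def by (auto intro!: mono_onI)
  qed
  from c consider "c = {..0}" | "c = {0<..<1}" | "c = {1}" | "c = {1<..}" by auto
  then show "mono_on c (quantile (cdf M))"
    by cases (use m1 m2 m3 in \<open>auto intro: mono_onI\<close>)
qed

lemma distr_Ulb_quantile: "distr Ulb borel (quantile (cdf M)) = M"
proof (rule cdf_unique)
  interpret U: prob_space Ulb by (rule Ulb_prob)
  show "real_distribution (distr Ulb borel (quantile (cdf M)))"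
    by (rule U.real_distribution_distr) simp
  show "real_distribution M" by (rule real_distribution_axioms)
  show "cdf (distr Ulb borel (quantile (cdf M))) = cdf M"
  proof
    fix x
    have "{0<..<1} \<inter> (quantile (cdf M) -` {..x}) = {0<..<1} \<inter> {..cdf M x}"
      using quantile_le_iff by auto
    moreover have ms: "quantile (cdf M) -` {..x} \<in> sets borel"
      using measurable_sets[OF quantile_measurable atMost_borel] by simp
    moreover have "emeasure (distr Ulb borel (quantile (cdf M))) {..x} = emeasure Ulb (quantile (cdf M) -` {..x})"
      by (subst emeasure_distr) auto
    ultimately have "emeasure (distr Ulb borel (quantile (cdf M))) {..x} = emeasure lborel ({0<..<1} \<inter> {..cdf M x})"
      by (simp add: Ulb_emeasure)
    also have "\<dots> = ennreal (cdf M x)"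
      by (rule lborel_unit_Iic) (auto simp: cdf_nonneg cdf_bounded_prob)
    finally show "cdf (distr Ulb borel (quantile (cdf M))) x = cdf M x"
      unfolding cdf_def measure_def by (simp add: cdf_nonneg[unfolded cdf_def])
  qed
qed

lemma distr_cdf_Ulb:
  assumes cont: "continuous_on UNIV (cdf M)"
  shows "distr M borel (cdf M) = Ulb"
proof (rule cdf_unique)
  have cm[measurable]: "cdf M \<in> borel_measurable borel"
    by (simp add: borel_measurable_continuous_onI cont)
  show "real_distribution (distr M borel (cdf M))"
    by (rule real_distribution_distr[OF measurable_finite_borel[OF cm]])
  show "real_distribution Ulb" by (rule Ulb_real_distribution)
  show "cdf (distr M borel (cdf M)) = cdf Ulb"
  proof
    fix t
    have "cdf (distr M borel (cdf M)) t = measure (distr M borel (cdf M)) {..t}"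
      by (rule cdf_def2)
    also have "\<dots> = measure M {x. cdf M x \<le> t}"
      by (subst measure_distr) (auto simp: vimage_def intro: measurable_finite_borel[OF cm])
    finally have cd: "cdf (distr M borel (cdf M)) t = measure M {x. cdf M x \<le> t}" .
    show "cdf (distr M borel (cdf M)) t = cdf Ulb t"
    proof (cases "t < 0")
      case True
      have "\<not> cdf M x \<le> t" for x using cdf_nonneg[of x] True by simp
      then have "{x. cdf M x \<le> t} = {}" by auto
      then show ?thesis using cd True cdf_Ulb_neg by simp
    next
      case False
      show ?thesis
      proof (cases "1 \<le> t")
        case True
        then have "{x. cdf M x \<le> t} = UNIV" using cdf_bounded_prob by (auto intro: order_trans)
        then show ?thesis using cd True cdf_Ulb_ge1 prob_space by simp
      next
        case False2: False
        then have t01: "0 \<le> t" "t < 1" using False by auto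
        define K where "K = {x. cdf M x \<le> t}"
        have "eventually (\<lambda>x. t < cdf M x) at_top"
          using cdf_lim_at_top_prob t01(2) by (rule order_tendstoD)
        then obtain N where N: "\<And>x. x \<ge> N \<Longrightarrow> t < cdf M x" by (auto simp: eventually_at_top_linorder)
        have Nx: "x \<le> N" if "x \<in> K" for x
        proof (rule ccontr)
          assume "\<not> x \<le> N"
          then have "t < cdf M x" by (intro N) simp
          with that show False by (simp add: K_def)
        qed
        have bddK: "bdd_above K" by (rule bdd_aboveI[of K N]) (rule Nx)
        have clK: "closed K" unfolding K_def
          by (rule closed_Collect_le) (auto intro: cont continuous_on_const)
        show ?thesis
        proof (cases "K = {}")
          case True
          have "t = 0"
          proof (rule ccontr)
            assume "t \<noteq> 0"
            then have "0 < t" using t01 by simp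
            have "eventually (\<lambda>x. cdf M x < t) at_bot"
              using cdf_lim_at_bot \<open>0 < t\<close> by (rule order_tendstoD)
            then obtain L where "\<And>x. x \<le> L \<Longrightarrow> cdf M x < t" by (auto simp: eventually_at_bot_linorder)
            then have "L \<in> K" unfolding K_def by (simp add: less_imp_le)
            then show False using True by simp
          qed
          then show ?thesis using cd True cdf_Ulb[of 0] unfolding K_def by simp
        next
          case False3: False
          define c where "c = Sup K"
          have cK: "c \<in> K" unfolding c_def by (rule closed_contains_Sup[OF False3 bddK clK])
          have Keq: "K = {..c}"
          proof
            show "K \<subseteq> {..c}" unfolding c_def using bddK by (auto intro: cSup_upper)
            show "{..c} \<subseteq> K" using cK unfolding K_def by (auto intro: order_trans cdf_nondecreasing)
          qed
          have "cdf M c \<le> t" using cK by (simp add: K_def)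
          moreover have "t \<le> cdf M c"
          proof -
            have gt: "t < cdf M y" if "y > c" for y
            proof (rule ccontr)
              assume "\<not> t < cdf M y"
              then have "y \<in> K" by (simp add: K_def)
              then show False using that Keq by auto
            qed
            have "(cdf M \<longlongrightarrow> cdf M c) (at_right c)"
              using cont by (simp add: continuous_on_eq_continuous_within continuous_within
                  filterlim_at_split)
            moreover have "eventually (\<lambda>y. t \<le> cdf M y) (at_right c)"
              using eventually_at_right_less[of c] by (rule eventually_mono) (use gt in \<open>auto simp: less_imp_le\<close>)
            ultimately show ?thesis by (rule tendsto_lowerbound) simp
          qed
          ultimately have "cdf M c = t" by simp
          then show ?thesis using cd Keq cdf_Ulb[OF t01(1)] t01 unfolding K_def by (simp add: cdf_def)
        qed
      qed
    qed
  qed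
qed

end


lemma concave_onD':
  assumes "concave_on A f" "x \<in> A" "y \<in> A" "0 \<le> u" "0 \<le> v" "u + v = 1"
  shows "u * f x + v * f y \<le> f (u *\<^sub>R x + v *\<^sub>R y)"
proof -
  have "\<forall>x\<in>A. \<forall>y\<in>A. \<forall>u\<ge>0. \<forall>v\<ge>0. u + v = 1 \<longrightarrow> f (u *\<^sub>R x + v *\<^sub>R y) \<ge> u * f x + v * f y"
    using assms(1) unfolding concave_on_iff by blast
  then show ?thesis using assms(2-6) by blast
qed

lemma concave_on_cong':
  fixes f g :: "real \<Rightarrow> real"
  assumes "concave_on A f" "\<And>x. x \<in> A \<Longrightarrow> f x = g x"
  shows "concave_on A g"
proof -
  have cA: "convex A" using assms(1) by (rule concave_on_imp_convex)
  show ?thesis unfolding concave_on_iff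
  proof (intro conjI cA ballI allI impI)
    fix x y u v :: real assume xy: "x \<in> A" "y \<in> A" and uv: "0 \<le> u" "0 \<le> v" "u + v = 1"
    have "u *\<^sub>R x + v *\<^sub>R y \<in> A" using convexD[OF cA xy uv] by simp
    moreover have "u * f x + v * f y \<le> f (u *\<^sub>R x + v *\<^sub>R y)"
      by (rule concave_onD'[OF assms(1) xy uv])
    ultimately show "u * g x + v * g y \<le> g (u *\<^sub>R x + v *\<^sub>R y)"
      using assms(2) xy by simp
  qed
qed

lemma concave_mono_comp:
  fixes f g :: "real \<Rightarrow> real"
  assumes f: "concave_on A f" "mono_on A f" and g: "concave_on B g" and gB: "g ` B \<subseteq> A"
  shows "concave_on B (\<lambda>x. f (g x))"
proof -
  have cA: "convex A" using f(1) by (rule concave_on_imp_convex)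
  have cB: "convex B" using g by (rule concave_on_imp_convex)
  show ?thesis unfolding concave_on_iff
  proof (intro conjI cB ballI allI impI)
    fix x y u v :: real assume xy: "x \<in> B" "y \<in> B" and uv: "0 \<le> u" "0 \<le> v" "u + v = 1"
    have gx: "g x \<in> A" "g y \<in> A" using gB xy by auto
    have p1: "u * g x + v * g y \<in> A" using convexD[OF cA gx uv] by simp
    have p2: "u * x + v * y \<in> B" using convexD[OF cB xy uv] by simp
    have "u * f (g x) + v * f (g y) \<le> f (u * g x + v * g y)"
      using concave_onD'[OF f(1) gx uv] by simp
    also have "u * g x + v * g y \<le> g (u * x + v * y)"
      using concave_onD'[OF g xy uv] by simp
    then have "f (u * g x + v * g y) \<le> f (g (u * x + v * y))"
      using p1 p2 gB by (intro mono_onD[OF f(2)]) auto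
    finally show "u * f (g x) + v * f (g y) \<le> f (g (u *\<^sub>R x + v *\<^sub>R y))" by simp
  qed
qed

lemma concave_powr:
  assumes "0 < a" "a \<le> 1"
  shows "concave_on {0<..} (\<lambda>x::real. x powr a)"
proof (rule f''_le0_imp_concave[where f'="\<lambda>x. a * x powr (a - 1)" and f''="\<lambda>x. a * ((a - 1) * x powr (a - 1 - 1))"])
  show "convex {0::real<..}" by simp
  fix x :: real assume x: "x \<in> {0<..}"
  show "((\<lambda>x. x powr a) has_real_derivative a * x powr (a - 1)) (at x)"
    using x by (auto intro!: derivative_eq_intros)
  show "((\<lambda>x. a * x powr (a - 1)) has_real_derivative a * ((a - 1) * x powr (a - 1 - 1))) (at x)"
    using x by (auto intro!: derivative_eq_intros)
  show "a * ((a - 1) * x powr (a - 1 - 1)) \<le> 0"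
    using assms x by (simp add: mult_nonneg_nonpos mult_nonpos_nonneg)
qed

lemma concave_min_const: "concave_on {0..} (\<lambda>x::real. min x c)"
proof (rule concave_on_linorderI)
  show "convex {0::real..}" by simp
  fix t x y :: real assume t: "0 < t" "t < 1"
  have "(1 - t) * min x c + t * min y c \<le> (1 - t) * x + t * y"
    using t by (intro add_mono mult_left_mono) auto
  moreover have "(1 - t) * min x c + t * min y c \<le> (1 - t) * c + t * c"
    using t by (intro add_mono mult_left_mono) auto
  ultimately show "(1 - t) * min x c + t * min y c \<le> min ((1 - t) *\<^sub>R x + t *\<^sub>R y) c"
    by (simp add: algebra_simps)
qed

lemma F_SSD_measurable:
  assumes "f \<in> F_SSD"
  shows "(\<lambda>x. indicator {0..} x *\<^sub>R f x :: real) \<in> borel_measurable borel"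
proof (rule borel_measurable_piecewise_mono[of "{{..<0}, {0..}}"])
  show "countable {{..<0}, {0::real..}}" by simp
  show "\<Union> {{..<0}, {0::real..}} = UNIV" by auto
  fix c assume c: "c \<in> {{..<0}, {0::real..}}"
  then show "c \<in> sets borel" by auto
  have fm: "mono_on {0..} f" using assms by (simp add: F_SSD_def)
  from c consider "c = {..<0}" | "c = {0..}" by auto
  then show "mono_on c (\<lambda>x. indicator {0..} x *\<^sub>R f x)"
  proof cases
    case 1
    show ?thesis by (rule mono_onI) (simp add: 1)
  next
    case 2
    show ?thesis
    proof (rule mono_onI)
      fix r s :: real assume "r \<in> c" "s \<in> c" "r \<le> s"
      then have "f r \<le> f s" using 2 by (intro mono_onD[OF fm]) auto
      then show "indicator {0..} r *\<^sub>R f r \<le> indicator {0..} s *\<^sub>R f s"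
        using 2 \<open>r \<in> c\<close> \<open>s \<in> c\<close> by simp
    qed
  qed
qed

lemma preceq_LN_comp:
  assumes s1: "\<sigma>1 > 0" and s2: "\<sigma>2 > 0" and s12: "\<sigma>2 \<le> \<sigma>1"
    and mm: "m1 + \<sigma>1^2/2 \<le> m2 + \<sigma>2^2/2"
    and hm[measurable]: "h \<in> borel_measurable borel" and hmono: "mono_on {0<..} h"
    and hc: "concave_on {0<..} h" and hpos: "\<And>x. x > 0 \<Longrightarrow> h x \<ge> 0"
  shows "preceq F_SSD (distr (LN m1 \<sigma>1) borel h) (distr (LN m2 \<sigma>2) borel h)"
  unfolding preceq_def
proof (intro ballI impI, elim conjE)
  fix f assume fF: "f \<in> F_SSD"
  define f0 where "f0 = (\<lambda>x. indicator {0..} x *\<^sub>R f x :: real)"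
  have f0m[measurable]: "f0 \<in> borel_measurable borel" unfolding f0_def by (rule F_SSD_measurable[OF fF])
  have fm: "mono_on {0..} f" and fc: "concave_on {0..} f" using fF by (auto simp: F_SSD_def)
  assume i1: "set_integrable (distr (LN m1 \<sigma>1) borel h) {0..} f"
    and i2: "set_integrable (distr (LN m2 \<sigma>2) borel h) {0..} f"
  define g where "g = (\<lambda>x. f0 (h x))"
  have gm[measurable]: "g \<in> borel_measurable borel" unfolding g_def by measurable
  have gf: "g x = f (h x)" if "x > 0" for x using hpos[OF that] by (simp add: g_def f0_def)
  have gmono: "mono_on {0<..} g"
  proof (rule mono_onI)
    fix r s :: real assume rs: "r \<in> {0<..}" "s \<in> {0<..}" "r \<le> s"
    have "h r \<le> h s" by (rule mono_onD[OF hmono rs])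
    then have "f (h r) \<le> f (h s)" using hpos rs by (intro mono_onD[OF fm]) auto
    then show "g r \<le> g s" using gf rs by simp
  qed
  have "concave_on {0<..} (\<lambda>x. f (h x))"
    by (rule concave_mono_comp[OF fc fm hc]) (use hpos in auto)
  then have gc: "concave_on {0<..} g" by (rule concave_on_cong') (simp add: gf)
  have int1: "integrable (LN m1 \<sigma>1) g"
    using i1 unfolding set_integrable_def f0_def[symmetric] g_def
    by (subst (asm) integrable_distr_eq) auto
  have int2: "integrable (LN m2 \<sigma>2) g"
    using i2 unfolding set_integrable_def f0_def[symmetric] g_def
    by (subst (asm) integrable_distr_eq) auto
  have "(LINT x:{0..}|distr (LN m1 \<sigma>1) borel h. f x) = integral\<^sup>L (LN m1 \<sigma>1) g"
    unfolding set_lebesgue_integral_def f0_def[symmetric] g_def by (subst integral_distr) auto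
  also have "\<dots> \<le> integral\<^sup>L (LN m2 \<sigma>2) g"
    by (rule ssd_LN[OF s1 s2 s12 mm gmono gc gm int1 int2])
  also have "\<dots> = (LINT x:{0..}|distr (LN m2 \<sigma>2) borel h. f x)"
    unfolding set_lebesgue_integral_def f0_def[symmetric] g_def by (subst integral_distr) auto
  finally show "(LINT x:{0..}|distr (LN m1 \<sigma>1) borel h. f x) \<le> (LINT x:{0..}|distr (LN m2 \<sigma>2) borel h. f x)" .
qed


lemma powr_less_iff_root:
  fixes x y a :: real
  assumes "x > 0" "y > 0" "a > 0"
  shows "x powr a < y \<longleftrightarrow> x < y powr (1/a)"
proof
  assume "x powr a < y"
  then have "(x powr a) powr (1/a) < y powr (1/a)"
    using assms by (intro powr_less_mono2) auto
  then show "x < y powr (1/a)" using assms by (simp add: powr_powr)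
next
  assume "x < y powr (1/a)"
  then have "x powr a < (y powr (1/a)) powr a"
    using assms by (intro powr_less_mono2) auto
  then show "x powr a < y" using assms by (simp add: powr_powr)
qed

lemma layer_arith:
  fixes t x C a :: real
  assumes "t > 0" "x > 0" "C > 0" "a > 0"
  shows "t < 1 / (C * x powr a) \<longleftrightarrow> x < (1 / (C * t)) powr (1/a)"
proof -
  have xp: "x powr a > 0" using assms by simp
  have "t < 1 / (C * x powr a) \<longleftrightarrow> t * (C * x powr a) < 1"
    using assms xp by (simp add: less_divide_eq mult_pos_pos)
  also have "\<dots> \<longleftrightarrow> x powr a < 1 / (C * t)"
    using assms by (simp add: less_divide_eq field_simps)
  also have "\<dots> \<longleftrightarrow> x < (1 / (C * t)) powr (1/a)"
    using assms by (intro powr_less_iff_root) auto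
  finally show ?thesis .
qed

lemma AE_exists_in_interval:
  assumes "AE t in lborel. P t" "(u::real) < v"
  shows "\<exists>t. u < t \<and> t < v \<and> P t"
proof (rule ccontr)
  assume nex: "\<not> (\<exists>t. u < t \<and> t < v \<and> P t)"
  from assms(1) obtain N where N: "{t \<in> space lborel. \<not> P t} \<subseteq> N" "emeasure lborel N = 0" "N \<in> sets lborel"
    by (rule AE_E)
  have "{u<..<v} \<subseteq> N" using N(1) nex by auto
  then have "emeasure lborel {u<..<v} \<le> emeasure lborel N" using N(3) by (intro emeasure_mono) auto
  then show False using N(2) assms(2) by simp
qed

lemma key_ineq:
  fixes Pstar D0 :: "real measure" and Xs X :: "real \<Rightarrow> real"
  assumes Pd: "real_distribution Pstar" and Ppos: "AE x in Pstar. x > 0"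
    and Xsm[measurable]: "Xs \<in> borel_measurable borel" and Xsnn: "\<And>x. x > 0 \<Longrightarrow> 0 \<le> Xs x"
    and Xsmono: "\<And>x y. 0 < x \<Longrightarrow> x \<le> y \<Longrightarrow> Xs x \<le> Xs y"
    and lawXs: "distr Pstar borel Xs = D0"
    and Xm[measurable]: "X \<in> borel_measurable borel" and Xnn: "\<And>x. x > 0 \<Longrightarrow> 0 \<le> X x"
    and pre: "preceq F_SSD D0 (distr Pstar borel X)"
  shows "(\<integral>\<^sup>+x. ennreal (Xs x) * indicator {..<b} x \<partial>Pstar) \<le> (\<integral>\<^sup>+x. ennreal (X x) * indicator {..<b} x \<partial>Pstar)"
proof (cases "b \<le> 0")
  case True
  interpret P: real_distribution Pstar by (rule Pd)
  have "AE x in Pstar. ennreal (Xs x) * indicator {..<b} x = 0"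
    using Ppos by eventually_elim (use True in auto)
  then have "(\<integral>\<^sup>+x. ennreal (Xs x) * indicator {..<b} x \<partial>Pstar) = 0"
    by (subst nn_integral_cong_AE[where v="\<lambda>_. 0"]) auto
  then show ?thesis by simp
next
  case False
  then have bpos: "b > 0" by simp
  interpret P: real_distribution Pstar by (rule Pd)
  have sP[measurable_cong]: "sets Pstar = sets borel" by simp
  define c where "c = Xs b"
  have c0: "0 \<le> c" unfolding c_def using Xsnn bpos by simp
  define f0 where "f0 = (\<lambda>x::real. indicator {0..} x *\<^sub>R min x c)"
  have f0m[measurable]: "f0 \<in> borel_measurable borel" unfolding f0_def by measurable
  have f0b: "norm (f0 x) \<le> c" for x unfolding f0_def using c0 by (auto split: split_indicator)
  have fF: "(\<lambda>x. min x c) \<in> F_SSD"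
    unfolding F_SSD_def by (auto intro!: mono_onI concave_min_const)
  interpret D: prob_space D0 unfolding lawXs[symmetric] by (rule P.prob_space_distr) simp
  interpret DX: prob_space "distr Pstar borel X" by (rule P.prob_space_distr) simp
  have si1: "set_integrable D0 {0..} (\<lambda>x. min x c)"
    unfolding set_integrable_def f0_def[symmetric]
    by (rule D.integrable_const_bound[where B=c]) (use f0b lawXs[symmetric] in auto)
  have si2: "set_integrable (distr Pstar borel X) {0..} (\<lambda>x. min x c)"
    unfolding set_integrable_def f0_def[symmetric]
    by (rule DX.integrable_const_bound[where B=c]) (use f0b in auto)
  have le: "(LINT x:{0..}|D0. min x c) \<le> (LINT x:{0..}|distr Pstar borel X. min x c)"
    using pre fF si1 si2 unfolding preceq_def by blast
  have L: "(LINT x:{0..}|D0. min x c) = (\<integral>x. min (Xs x) c \<partial>Pstar)"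
  proof -
    have "(LINT x:{0..}|D0. min x c) = integral\<^sup>L (distr Pstar borel Xs) f0"
      unfolding set_lebesgue_integral_def f0_def lawXs ..
    also have "\<dots> = (\<integral>x. f0 (Xs x) \<partial>Pstar)" by (subst integral_distr) auto
    also have "\<dots> = (\<integral>x. min (Xs x) c \<partial>Pstar)"
      by (rule integral_cong_AE) (use Ppos Xsnn in \<open>auto simp: f0_def elim!: eventually_mono\<close>)
    finally show ?thesis .
  qed
  have R: "(LINT x:{0..}|distr Pstar borel X. min x c) = (\<integral>x. min (X x) c \<partial>Pstar)"
  proof -
    have "(LINT x:{0..}|distr Pstar borel X. min x c) = integral\<^sup>L (distr Pstar borel X) f0"
      unfolding set_lebesgue_integral_def f0_def ..
    also have "\<dots> = (\<integral>x. f0 (X x) \<partial>Pstar)" by (subst integral_distr) auto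
    also have "\<dots> = (\<integral>x. min (X x) c \<partial>Pstar)"
      by (rule integral_cong_AE) (use Ppos Xnn in \<open>auto simp: f0_def elim!: eventually_mono\<close>)
    finally show ?thesis .
  qed
  have intXs: "integrable Pstar (\<lambda>x. Xs x * indicator {..<b} x)"
  proof (rule P.integrable_const_bound[where B=c])
    show "AE x in Pstar. norm (Xs x * indicator {..<b} x) \<le> c"
      using Ppos
    proof eventually_elim
      case (elim x)
      show ?case
      proof (cases "x < b")
        case True
        then show ?thesis using Xsnn[OF elim] Xsmono[OF elim, of b] by (simp add: c_def)
      qed (use c0 in simp)
    qed
  qed simp
  have intI: "integrable Pstar (\<lambda>x. c * indicator {b..} x :: real)"
    by (rule P.integrable_const_bound[where B=c]) (use c0 in \<open>auto split: split_indicator\<close>)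
  have decXs: "(\<integral>x. min (Xs x) c \<partial>Pstar) = (\<integral>x. Xs x * indicator {..<b} x + c * indicator {b..} x \<partial>Pstar)"
  proof (rule integral_cong_AE)
    show "AE x in Pstar. min (Xs x) c = Xs x * indicator {..<b} x + c * indicator {b..} x"
      using Ppos
    proof eventually_elim
      case (elim x)
      show ?case
      proof (cases "x < b")
        case True
        then show ?thesis using Xsmono[OF elim, of b] by (simp add: c_def)
      next
        case False
        then have "c \<le> Xs x" unfolding c_def using Xsmono bpos by simp
        then show ?thesis using False by simp
      qed
    qed
  qed auto
  also have "\<dots> = (\<integral>x. Xs x * indicator {..<b} x \<partial>Pstar) + (\<integral>x. c * indicator {b..} x \<partial>Pstar)"
    by (rule Bochner_Integration.integral_add[OF intXs intI])
  finally have decXs': "(\<integral>x. min (Xs x) c \<partial>Pstar) = (\<integral>x. Xs x * indicator {..<b} x \<partial>Pstar) + (\<integral>x. c * indicator {b..} x \<partial>Pstar)" .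
  have HXs: "(\<integral>\<^sup>+x. ennreal (Xs x) * indicator {..<b} x \<partial>Pstar) = ennreal (\<integral>x. Xs x * indicator {..<b} x \<partial>Pstar)"
  proof -
    have "(\<integral>\<^sup>+x. ennreal (Xs x) * indicator {..<b} x \<partial>Pstar) = (\<integral>\<^sup>+x. ennreal (Xs x * indicator {..<b} x) \<partial>Pstar)"
      by (intro nn_integral_cong) (auto split: split_indicator)
    also have "\<dots> = ennreal (\<integral>x. Xs x * indicator {..<b} x \<partial>Pstar)"
      by (rule nn_integral_eq_integral[OF intXs]) (use Ppos Xsnn in \<open>auto elim!: eventually_mono\<close>)
    finally show ?thesis .
  qed
  show ?thesis
  proof (cases "(\<integral>\<^sup>+x. ennreal (X x) * indicator {..<b} x \<partial>Pstar) = \<infinity>")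
    case True
    then show ?thesis by simp
  next
    case False
    have eqX: "(\<integral>\<^sup>+x. ennreal (X x) * indicator {..<b} x \<partial>Pstar) = (\<integral>\<^sup>+x. ennreal (X x * indicator {..<b} x) \<partial>Pstar)"
      by (intro nn_integral_cong) (auto split: split_indicator)
    have intX: "integrable Pstar (\<lambda>x. X x * indicator {..<b} x)"
    proof (rule integrableI_nonneg)
      show "AE x in Pstar. 0 \<le> X x * indicator {..<b} x" using Ppos Xnn by (auto elim!: eventually_mono)
      show "(\<integral>\<^sup>+x. ennreal (X x * indicator {..<b} x) \<partial>Pstar) < \<infinity>" using False eqX by (simp add: top.not_eq_extremum)
    qed simp
    have HX: "(\<integral>\<^sup>+x. ennreal (X x) * indicator {..<b} x \<partial>Pstar) = ennreal (\<integral>x. X x * indicator {..<b} x \<partial>Pstar)"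
      unfolding eqX by (rule nn_integral_eq_integral[OF intX]) (use Ppos Xnn in \<open>auto elim!: eventually_mono\<close>)
    have intminX: "integrable Pstar (\<lambda>x. min (X x) c)"
    proof (rule P.integrable_const_bound[where B=c])
      show "AE x in Pstar. norm (min (X x) c) \<le> c"
        using Ppos by eventually_elim (use Xnn c0 in auto)
    qed simp
    have "(\<integral>x. min (X x) c \<partial>Pstar) \<le> (\<integral>x. X x * indicator {..<b} x + c * indicator {b..} x \<partial>Pstar)"
    proof (rule integral_mono_AE[OF intminX])
      show "integrable Pstar (\<lambda>x. X x * indicator {..<b} x + c * indicator {b..} x)"
        by (rule Bochner_Integration.integrable_add[OF intX intI])
      show "AE x in Pstar. min (X x) c \<le> X x * indicator {..<b} x + c * indicator {b..} x"
        using Ppos by eventually_elim (use Xnn in \<open>auto split: split_indicator\<close>)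
    qed
    also have "\<dots> = (\<integral>x. X x * indicator {..<b} x \<partial>Pstar) + (\<integral>x. c * indicator {b..} x \<partial>Pstar)"
      by (rule Bochner_Integration.integral_add[OF intX intI])
    finally have "(\<integral>x. Xs x * indicator {..<b} x \<partial>Pstar) \<le> (\<integral>x. X x * indicator {..<b} x \<partial>Pstar)"
      using le L R decXs' by simp
    then show ?thesis unfolding HXs HX by (rule ennreal_leI)
  qed
qed


lemma layer_cake:
  fixes Pstar :: "real measure" and Y :: "real \<Rightarrow> real" and C a :: real
  assumes Pd: "real_distribution Pstar" and Ppos: "AE x in Pstar. x > 0"
    and C: "C > 0" and a: "a > 0"
    and Ym[measurable]: "Y \<in> borel_measurable borel" and Ynn: "\<And>x. x > 0 \<Longrightarrow> 0 \<le> Y x"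
  shows "(\<integral>\<^sup>+x. ennreal (Y x) \<partial>density Pstar (\<lambda>x. ennreal (1/(C * x powr a)))) =
          (\<integral>\<^sup>+t. indicator {0<..} t * (\<integral>\<^sup>+x. ennreal (Y x) * indicator {..<(1/(C*t)) powr (1/a)} x \<partial>Pstar) \<partial>lborel)"
    and "(\<lambda>t. indicator {0<..} t * (\<integral>\<^sup>+x. ennreal (Y x) * indicator {..<(1/(C*t)) powr (1/a)} x \<partial>Pstar)) \<in> borel_measurable lborel"
proof -
  interpret P: real_distribution Pstar by (rule Pd)
  interpret PL: pair_sigma_finite Pstar lborel
    by (intro pair_sigma_finite.intro P.sigma_finite_measure_axioms lborel.sigma_finite_measure_axioms)
  have sP[measurable_cong]: "sets Pstar = sets borel" by simp
  define Z where "Z = (\<lambda>x::real. 1/(C * x powr a))"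
  have Zm[measurable]: "Z \<in> borel_measurable borel" unfolding Z_def by measurable
  have Z0: "0 \<le> Z x" for x unfolding Z_def using C by simp
  define G where "G = (\<lambda>x t. if 0 < t \<and> t < Z x then ennreal (Y x) else 0)"
  have Gm: "(\<lambda>(x, t). G x t) \<in> borel_measurable (Pstar \<Otimes>\<^sub>M lborel)"
    unfolding G_def split_beta' by measurable
  have Gm2: "(\<lambda>(t, x). G x t) \<in> borel_measurable (lborel \<Otimes>\<^sub>M Pstar)"
    unfolding G_def split_beta' by measurable
  have inner_t: "(\<integral>\<^sup>+t. G x t \<partial>lborel) = ennreal (Z x) * ennreal (Y x)" for x
  proof -
    have "(\<integral>\<^sup>+t. G x t \<partial>lborel) = (\<integral>\<^sup>+t. ennreal (Y x) * indicator {0<..<Z x} t \<partial>lborel)"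
      by (intro nn_integral_cong) (auto simp: G_def split: split_indicator)
    also have "\<dots> = ennreal (Y x) * emeasure lborel {0<..<Z x}"
      by (rule nn_integral_cmult_indicator) simp
    also have "\<dots> = ennreal (Z x) * ennreal (Y x)" using Z0[of x] by (simp add: mult.commute)
    finally show ?thesis .
  qed
  have inner_x: "(\<integral>\<^sup>+x. G x t \<partial>Pstar) = indicator {0<..} t * (\<integral>\<^sup>+x. ennreal (Y x) * indicator {..<(1/(C*t)) powr (1/a)} x \<partial>Pstar)" for t
  proof (cases "t > 0")
    case True
    have "(\<integral>\<^sup>+x. G x t \<partial>Pstar) = (\<integral>\<^sup>+x. ennreal (Y x) * indicator {..<(1/(C*t)) powr (1/a)} x \<partial>Pstar)"
    proof (rule nn_integral_cong_AE)
      show "AE x in Pstar. G x t = ennreal (Y x) * indicator {..<(1/(C*t)) powr (1/a)} x"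
        using Ppos
      proof eventually_elim
        case (elim x)
        have "t < Z x \<longleftrightarrow> x < (1/(C*t)) powr (1/a)"
          unfolding Z_def by (rule layer_arith[OF True elim C a])
        then show ?case using True by (auto simp: G_def split: split_indicator)
      qed
    qed
    then show ?thesis using True by simp
  next
    case False
    then show ?thesis by (simp add: G_def)
  qed
  have "(\<integral>\<^sup>+x. ennreal (Y x) \<partial>density Pstar (\<lambda>x. ennreal (1/(C * x powr a)))) = (\<integral>\<^sup>+x. ennreal (Z x) * ennreal (Y x) \<partial>Pstar)"
    unfolding Z_def by (subst nn_integral_density) auto
  also have "\<dots> = (\<integral>\<^sup>+x. (\<integral>\<^sup>+t. G x t \<partial>lborel) \<partial>Pstar)" by (simp add: inner_t)
  also have "\<dots> = (\<integral>\<^sup>+t. (\<integral>\<^sup>+x. G x t \<partial>Pstar) \<partial>lborel)" by (rule PL.Fubini'[OF Gm, symmetric])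
  also have "\<dots> = (\<integral>\<^sup>+t. indicator {0<..} t * (\<integral>\<^sup>+x. ennreal (Y x) * indicator {..<(1/(C*t)) powr (1/a)} x \<partial>Pstar) \<partial>lborel)"
    by (simp add: inner_x)
  finally show "(\<integral>\<^sup>+x. ennreal (Y x) \<partial>density Pstar (\<lambda>x. ennreal (1/(C * x powr a)))) =
          (\<integral>\<^sup>+t. indicator {0<..} t * (\<integral>\<^sup>+x. ennreal (Y x) * indicator {..<(1/(C*t)) powr (1/a)} x \<partial>Pstar) \<partial>lborel)" .
  have "(\<lambda>t. \<integral>\<^sup>+x. G x t \<partial>Pstar) \<in> borel_measurable lborel"
    using P.borel_measurable_nn_integral[of "\<lambda>t x. G x t" lborel] Gm2 by simp
  then show "(\<lambda>t. indicator {0<..} t * (\<integral>\<^sup>+x. ennreal (Y x) * indicator {..<(1/(C*t)) powr (1/a)} x \<partial>Pstar)) \<in> borel_measurable lborel"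
    by (simp add: inner_x)
qed

lemma density_eq_from_Iio:
  fixes Pstar :: "real measure" and X Xs :: "real \<Rightarrow> real"
  assumes Pd: "real_distribution Pstar"
    and Xm[measurable]: "X \<in> borel_measurable borel" and Xsm[measurable]: "Xs \<in> borel_measurable borel"
    and eq: "\<And>b. (\<integral>\<^sup>+x. ennreal (X x) * indicator {..<b} x \<partial>Pstar) = (\<integral>\<^sup>+x. ennreal (Xs x) * indicator {..<b} x \<partial>Pstar)"
    and fin: "\<And>b. (\<integral>\<^sup>+x. ennreal (Xs x) * indicator {..<b} x \<partial>Pstar) < \<infinity>"
  shows "AE x in Pstar. ennreal (X x) = ennreal (Xs x)"
proof -
  interpret P: real_distribution Pstar by (rule Pd)
  have sP[measurable_cong]: "sets Pstar = sets borel" by simp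
  have sB: "sets (borel::real measure) = sigma_sets UNIV (range lessThan)"
    by (subst borel_Iio) (simp add: sets_measure_of)
  have "density Pstar (\<lambda>x. ennreal (X x)) = density Pstar (\<lambda>x. ennreal (Xs x))"
  proof (rule measure_eqI_generator_eq[where \<Omega>=UNIV and E="range lessThan" and A="\<lambda>i. {..<real i}"])
    show "Int_stable (range (lessThan :: real \<Rightarrow> real set))"
    proof (rule Int_stableI)
      fix A B assume "A \<in> range (lessThan :: real \<Rightarrow> real set)" "B \<in> range (lessThan :: real \<Rightarrow> real set)"
      then obtain x y where "A = {..<x}" "B = {..<y}" by auto
      then have "A \<inter> B = {..<min x y}" by auto
      then show "A \<inter> B \<in> range lessThan" by simp
    qed
    show "range lessThan \<subseteq> Pow (UNIV :: real set)" by auto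
    fix X' assume "X' \<in> range (lessThan :: real \<Rightarrow> real set)"
    then obtain b where X': "X' = {..<b}" by auto
    show "emeasure (density Pstar (\<lambda>x. ennreal (X x))) X' = emeasure (density Pstar (\<lambda>x. ennreal (Xs x))) X'"
      unfolding X' by (simp add: emeasure_density eq)
  next
    show "sets (density Pstar (\<lambda>x. ennreal (X x))) = sigma_sets UNIV (range lessThan)" using sB by simp
    show "sets (density Pstar (\<lambda>x. ennreal (Xs x))) = sigma_sets UNIV (range lessThan)" using sB by simp
    show "range (\<lambda>i. {..<real i}) \<subseteq> range lessThan" by auto
    show "(\<Union>i. {..<real i}) = UNIV" by (auto intro: reals_Archimedean2)
    fix i :: nat
    show "emeasure (density Pstar (\<lambda>x. ennreal (X x))) {..<real i} \<noteq> \<infinity>"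
      using fin[of "real i"] by (simp add: emeasure_density eq)
  qed
  then show ?thesis by (subst (asm) P.density_unique_iff) auto
qed


lemma abs_mult_le_squares: "\<bar>(a::real) * b\<bar> \<le> a^2 + b^2"
proof -
  have "0 \<le> (\<bar>a\<bar> - \<bar>b\<bar>)^2" by simp
  then have "2 * (\<bar>a\<bar> * \<bar>b\<bar>) \<le> \<bar>a\<bar>^2 + \<bar>b\<bar>^2" by (simp add: power2_diff)
  moreover have "0 \<le> \<bar>a\<bar> * \<bar>b\<bar>" by simp
  ultimately have "\<bar>a\<bar> * \<bar>b\<bar> \<le> \<bar>a\<bar>^2 + \<bar>b\<bar>^2" by linarith
  then show ?thesis by (simp add: abs_mult)
qed

lemma SUP_indicator_approx:
  fixes b x :: real
  shows "(SUP n. indicator {..< b - 1 / real (Suc n)} x :: ennreal) = indicator {..<b} x"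
proof (cases "x < b")
  case True
  then obtain n where n: "inverse (real (Suc n)) < b - x" using reals_Archimedean[of "b - x"] by auto
  then have xn: "x < b - 1 / real (Suc n)" by (simp add: field_simps inverse_eq_divide)
  have "(SUP n. indicator {..< b - 1 / real (Suc n)} x :: ennreal) \<le> 1"
    by (rule SUP_least) (simp split: split_indicator)
  moreover have "(1::ennreal) \<le> (SUP n. indicator {..< b - 1 / real (Suc n)} x)"
    using xn by (intro SUP_upper2[of n]) auto
  ultimately show ?thesis using True by simp
next
  case False
  have "x \<notin> {..< b - 1 / real (Suc n)}" for n
  proof -
    have "0 < 1 / real (Suc n)" by simp
    then have "\<not> x < b - 1 / real (Suc n)" using False by linarith
    then show ?thesis by simp
  qed
  then show ?thesis using False by simp
qed


lemma rce_abstract: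
  fixes Pstar Q D0 :: "real measure" and Ps :: "real measure set" and C a r T :: real
  assumes Pd: "real_distribution Pstar"
    and Ppos: "AE x in Pstar. x > 0"
    and Pcont: "continuous_on UNIV (cdf Pstar)"
    and P01: "\<And>x. x > 0 \<Longrightarrow> 0 < cdf Pstar x \<and> cdf Pstar x < 1"
    and Cpos: "C > 0" and apos: "0 < a" and a1: "a \<le> 1"
    and Qd: "Q = density Pstar (\<lambda>x. ennreal (1 / (C * x powr a)))"
    and Z2: "integrable Pstar (\<lambda>x. (1 / (C * x powr a))^2)"
    and PsP: "Pstar \<in> Ps"
    and Ps_sets: "\<And>P. P \<in> Ps \<Longrightarrow> sets P = sets borel"
    and Ps_ssd: "\<And>P g. P \<in> Ps \<Longrightarrow> g \<in> borel_measurable borel \<Longrightarrow> mono_on {0<..} g \<Longrightarrow>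
        concave_on {0<..} g \<Longrightarrow> integrable Pstar g \<Longrightarrow> integrable P g \<Longrightarrow> integral\<^sup>L Pstar g \<le> integral\<^sup>L P g"
    and D0d: "real_distribution D0" and D0neg: "\<And>x. x < 0 \<Longrightarrow> cdf D0 x = 0"
    and D0sq: "(\<integral>\<^sup>+ u\<in>{0<..<1}. ennreal ((quantile (cdf D0) u)\<^sup>2) \<partial>lborel) < \<infinity>"
    and D0cc: "concave_on {0<..} (\<lambda>x. quantile (cdf D0) (cdf (distr Pstar borel (\<lambda>x. C * x powr a)) x))"
  shows "rce_unique_solution F_SSD r T Q Ps D0 Pstar (\<lambda>x. quantile (cdf D0) (cdf Pstar x))"
proof -
  interpret P: real_distribution Pstar by (rule Pd)
  interpret D: real_distribution D0 by (rule D0d)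
  have sP[measurable_cong]: "sets Pstar = sets borel" by simp
  define F where "F = cdf Pstar"
  define q where "q = quantile (cdf D0)"
  define Xs where "Xs = (\<lambda>x. q (F x))"
  define ell where "ell = (\<lambda>x::real. C * x powr a)"
  define Z where "Z = (\<lambda>x::real. 1 / (C * x powr a))"
  define H where "H = (\<lambda>Y b. \<integral>\<^sup>+x. ennreal (Y x) * indicator {..<b::real} x \<partial>Pstar)"
  define bt where "bt = (\<lambda>t::real. (1/(C*t)) powr (1/a))"
  have Fm[measurable]: "F \<in> borel_measurable borel" unfolding F_def using Pcont by (rule borel_measurable_continuous_onI)
  have qm[measurable]: "q \<in> borel_measurable borel" unfolding q_def by (rule D.quantile_measurable)
  have Xsm[measurable]: "Xs \<in> borel_measurable borel" unfolding Xs_def by measurable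
  have ellm[measurable]: "ell \<in> borel_measurable borel" unfolding ell_def by measurable
  have Zm[measurable]: "Z \<in> borel_measurable borel" unfolding Z_def by measurable
  have Z0: "0 \<le> Z x" for x unfolding Z_def using Cpos by simp
  have F01: "0 < F x" "F x < 1" if "x > 0" for x using P01[OF that] by (auto simp: F_def)
  have Xsnn: "0 \<le> Xs x" if "x > 0" for x
    unfolding Xs_def q_def by (rule D.quantile_nonneg[OF D0neg F01[OF that]])
  have Xsmono: "Xs x \<le> Xs y" if "0 < x" "x \<le> y" for x y
  proof -
    have "F x \<le> F y" unfolding F_def using P.cdf_nondecreasing[OF that(2)] .
    moreover have "0 < y" using that by simp
    ultimately show ?thesis unfolding Xs_def q_def using F01 that
      by (intro D.quantile_mono) auto
  qed
  have lawF: "distr Pstar borel F = Ulb" unfolding F_def by (rule P.distr_cdf_Ulb[OF Pcont])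
  have lawXs: "distr Pstar borel Xs = D0"
  proof -
    have "distr Pstar borel Xs = distr (distr Pstar borel F) borel q"
      by (subst distr_distr) (auto simp: comp_def Xs_def)
    also have "\<dots> = D0" unfolding lawF q_def by (rule D.distr_Ulb_quantile)
    finally show ?thesis .
  qed
  have Xs2: "(\<integral>\<^sup>+x. ennreal ((Xs x)^2) \<partial>Pstar) < \<infinity>"
  proof -
    have "(\<integral>\<^sup>+x. ennreal ((Xs x)^2) \<partial>Pstar) = (\<integral>\<^sup>+u. ennreal ((q u)^2) \<partial>distr Pstar borel F)"
      by (subst nn_integral_distr) (auto simp: Xs_def)
    also have "\<dots> = (\<integral>\<^sup>+u. indicator {0<..<1} u * ennreal ((q u)^2) \<partial>lborel)"
      unfolding lawF by (subst nn_integral_density) auto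
    also have "\<dots> = (\<integral>\<^sup>+ u\<in>{0<..<1}. ennreal ((quantile (cdf D0) u)\<^sup>2) \<partial>lborel)"
      by (simp add: q_def mult.commute)
    finally show ?thesis using D0sq by simp
  qed
  have intXs2: "integrable Pstar (\<lambda>x. (Xs x)^2)"
    by (rule integrableI_nonneg) (use Xs2 in auto)
  have intZ2: "integrable Pstar (\<lambda>x. (Z x)^2)" using Z2 by (simp add: Z_def)
  have intZXs: "integrable Pstar (\<lambda>x. Z x * Xs x)"
  proof (rule Bochner_Integration.integrable_bound[OF Bochner_Integration.integrable_add[OF intZ2 intXs2]])
    show "AE x in Pstar. norm (Z x * Xs x) \<le> norm ((Z x)^2 + (Xs x)^2)"
      using abs_mult_le_squares by auto
  qed simp
  have QD: "Q = density Pstar (\<lambda>x. ennreal (Z x))" unfolding Qd Z_def ..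
  have sQ[measurable_cong]: "sets Q = sets borel" unfolding QD by simp
  have Qpos: "AE x in Q. x > 0" unfolding QD using Ppos by (subst AE_density) (auto elim: eventually_mono)
  have intQXs: "integrable Q Xs"
    unfolding QD using intZXs Z0 by (subst integrable_density) auto
  have Xspay: "Xs \<in> payoffs Q"
    unfolding payoffs_def using intQXs Xsnn by auto
  define Fl where "Fl = cdf (distr Pstar borel ell)"
  define h where "h = (\<lambda>y. q (Fl y))"
  have hc: "concave_on {0<..} h" using D0cc unfolding h_def q_def Fl_def ell_def .
  have ellpos: "ell x > 0" if "x > 0" for x unfolding ell_def using that Cpos by simp
  have ell_le: "ell y \<le> ell x \<longleftrightarrow> y \<le> x" if "x > 0" "y > 0" for x y
  proof -
    have "y powr a \<le> x powr a \<longleftrightarrow> y \<le> x"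
      using that apos by (metis linorder_not_le powr_less_mono2 powr_mono2 less_imp_le)
    then show ?thesis unfolding ell_def using Cpos by simp
  qed
  have Flell: "Fl (ell x) = F x" if "x > 0" for x
  proof -
    have "Fl (ell x) = measure Pstar (ell -` {..ell x})"
      unfolding Fl_def cdf_def by (subst measure_distr) auto
    also have "\<dots> = measure Pstar {..x}"
    proof (rule measure_eq_AE)
      show "ell -` {..ell x} \<in> sets Pstar" using measurable_sets[OF ellm atMost_borel] by simp
    qed (use Ppos ell_le that in \<open>auto elim!: eventually_mono\<close>)
    finally show ?thesis by (simp add: F_def cdf_def)
  qed
  have Xs_h: "Xs x = h (ell x)" if "x > 0" for x unfolding Xs_def h_def using Flell[OF that] by simp
  have ell_surj: "ell ((y/C) powr (1/a)) = y" "(y/C) powr (1/a) > 0" if "y > 0" for y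
    unfolding ell_def using that Cpos apos by (auto simp: powr_powr)
  have hmono: "mono_on {0<..} h"
  proof (rule mono_onI)
    fix u v :: real assume uv: "u \<in> {0<..}" "v \<in> {0<..}" "u \<le> v"
    define xu where "xu = (u/C) powr (1/a)"
    define xv where "xv = (v/C) powr (1/a)"
    have pos: "xu > 0" "xv > 0" using ell_surj uv by (auto simp: xu_def xv_def)
    have eu: "ell xu = u" and ev: "ell xv = v" using ell_surj uv by (auto simp: xu_def xv_def)
    have "xu \<le> xv" using ell_le[OF pos(2) pos(1)] eu ev uv by simp
    then have "Xs xu \<le> Xs xv" using pos by (intro Xsmono) auto
    then show "h u \<le> h v" using Xs_h[OF pos(1)] Xs_h[OF pos(2)] eu ev by simp
  qed
  have ellc: "concave_on {0<..} ell"
    unfolding ell_def using concave_powr[OF apos a1] Cpos by (intro concave_on_cmul) auto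
  have "concave_on {0<..} (\<lambda>x. h (ell x))"
    by (rule concave_mono_comp[OF hc hmono ellc]) (use ellpos in auto)
  then have Xsc: "concave_on {0<..} Xs" by (rule concave_on_cong') (simp add: Xs_h)
  have Xsmono_on: "mono_on {0<..} Xs" by (rule mono_onI) (auto intro: Xsmono)
  have feas: "preceq F_SSD D0 (law P Xs)" if PP: "P \<in> Ps" for P
    unfolding preceq_def law_def
  proof (intro ballI impI, elim conjE)
    fix f assume fF: "f \<in> F_SSD"
    have sPP[measurable_cong]: "sets P = sets borel" using Ps_sets[OF PP] .
    define f0 where "f0 = (\<lambda>x. indicator {0..} x *\<^sub>R f x :: real)"
    have f0m[measurable]: "f0 \<in> borel_measurable borel" unfolding f0_def by (rule F_SSD_measurable[OF fF])
    have fm: "mono_on {0..} f" and fc: "concave_on {0..} f" using fF by (auto simp: F_SSD_def)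
    assume i1: "set_integrable D0 {0..} f" and i2: "set_integrable (distr P borel Xs) {0..} f"
    define g where "g = (\<lambda>x. f0 (Xs x))"
    have gm[measurable]: "g \<in> borel_measurable borel" unfolding g_def by measurable
    have gf: "g x = f (Xs x)" if "x > 0" for x using Xsnn[OF that] by (simp add: g_def f0_def)
    have gmono: "mono_on {0<..} g"
    proof (rule mono_onI)
      fix u v :: real assume uv: "u \<in> {0<..}" "v \<in> {0<..}" "u \<le> v"
      have "Xs u \<le> Xs v" using uv by (intro Xsmono) auto
      then have "f (Xs u) \<le> f (Xs v)" using Xsnn uv by (intro mono_onD[OF fm]) auto
      then show "g u \<le> g v" using gf uv by simp
    qed
    have "concave_on {0<..} (\<lambda>x. f (Xs x))"
      by (rule concave_mono_comp[OF fc fm Xsc]) (use Xsnn in auto)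
    then have gc: "concave_on {0<..} g" by (rule concave_on_cong') (simp add: gf)
    have int1: "integrable Pstar g"
      using i1 unfolding set_integrable_def f0_def[symmetric] g_def lawXs[symmetric]
      by (subst (asm) integrable_distr_eq) auto
    have int2: "integrable P g"
      using i2 unfolding set_integrable_def f0_def[symmetric] g_def
      by (subst (asm) integrable_distr_eq) auto
    have "(LINT x:{0..}|D0. f x) = integral\<^sup>L Pstar g"
      unfolding set_lebesgue_integral_def f0_def[symmetric] g_def lawXs[symmetric]
      by (subst integral_distr) auto
    also have "\<dots> \<le> integral\<^sup>L P g" by (rule Ps_ssd[OF PP gm gmono gc int1 int2])
    also have "\<dots> = (LINT x:{0..}|distr P borel Xs. f x)"
      unfolding set_lebesgue_integral_def f0_def[symmetric] g_def by (subst integral_distr) auto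
    finally show "(LINT x:{0..}|D0. f x) \<le> (LINT x:{0..}|distr P borel Xs. f x)" .
  qed
  have Xsfeas: "Xs \<in> rce_feasible F_SSD Q Ps D0" unfolding rce_feasible_def using Xspay feas by auto
  have nnQ: "(\<integral>\<^sup>+x. ennreal (Y x) \<partial>Q) = ennreal (integral\<^sup>L Q Y)" if "Y \<in> payoffs Q" for Y
  proof -
    have "integrable Q Y" using that by (simp add: payoffs_def)
    moreover have "AE x in Q. 0 \<le> Y x" using Qpos that by (auto simp: payoffs_def elim!: eventually_mono)
    ultimately show ?thesis by (rule nn_integral_eq_integral)
  qed
  have intQnn: "0 \<le> integral\<^sup>L Q Y" if "Y \<in> payoffs Q" for Y
    using Qpos that by (intro integral_nonneg_AE) (auto simp: payoffs_def elim!: eventually_mono)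
  have LC: "(\<integral>\<^sup>+x. ennreal (Y x) \<partial>Q) = (\<integral>\<^sup>+t. indicator {0<..} t * H Y (bt t) \<partial>lborel)"
    "(\<lambda>t. indicator {0<..} t * H Y (bt t)) \<in> borel_measurable lborel"
    if "Y \<in> payoffs Q" for Y
  proof -
    have Ym: "Y \<in> borel_measurable borel" and Ynn: "\<And>x. x > 0 \<Longrightarrow> 0 \<le> Y x" using that by (auto simp: payoffs_def)
    show "(\<integral>\<^sup>+x. ennreal (Y x) \<partial>Q) = (\<integral>\<^sup>+t. indicator {0<..} t * H Y (bt t) \<partial>lborel)"
      unfolding Qd H_def bt_def by (rule layer_cake(1)[OF Pd Ppos Cpos apos Ym Ynn])
    show "(\<lambda>t. indicator {0<..} t * H Y (bt t)) \<in> borel_measurable lborel"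
      unfolding H_def bt_def by (rule layer_cake(2)[OF Pd Ppos Cpos apos Ym Ynn])
  qed
  have Hle: "H Xs b \<le> H X b" if "X \<in> rce_feasible F_SSD Q Ps D0" for X b
  proof -
    have Xm: "X \<in> borel_measurable borel" and Xnn: "\<And>x. x > 0 \<Longrightarrow> 0 \<le> X x"
      using that by (auto simp: rce_feasible_def payoffs_def)
    have "preceq F_SSD D0 (distr Pstar borel X)" using that PsP by (auto simp: rce_feasible_def law_def)
    note pre = this
    show ?thesis unfolding H_def
      by (rule key_ineq[where Xs=Xs and X=X and Pstar=Pstar])
        (fact Pd Ppos Xsm lawXs Xm pre | erule Xsnn | erule (1) Xsmono | erule Xnn)+
  qed
  have opt_nn: "(\<integral>\<^sup>+x. ennreal (Xs x) \<partial>Q) \<le> (\<integral>\<^sup>+x. ennreal (X x) \<partial>Q)" if X: "X \<in> rce_feasible F_SSD Q Ps D0" for X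
  proof -
    have Xp: "X \<in> payoffs Q" using X by (simp add: rce_feasible_def)
    show ?thesis unfolding LC(1)[OF Xspay] LC(1)[OF Xp]
      by (intro nn_integral_mono mult_left_mono Hle[OF X]) auto
  qed
  have opt: "price r T Q Xs \<le> price r T Q X" if X: "X \<in> rce_feasible F_SSD Q Ps D0" for X
  proof -
    have Xp: "X \<in> payoffs Q" using X by (simp add: rce_feasible_def)
    have "ennreal (integral\<^sup>L Q Xs) \<le> ennreal (integral\<^sup>L Q X)"
      using opt_nn[OF X] nnQ[OF Xspay] nnQ[OF Xp] by simp
    then have "integral\<^sup>L Q Xs \<le> integral\<^sup>L Q X" using intQnn[OF Xp] by (simp add: ennreal_le_iff)
    then show ?thesis unfolding price_def by (intro mult_left_mono) auto
  qed
  have uniq: "AE x in Pstar. X x = Xs x"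
    if X: "X \<in> rce_feasible F_SSD Q Ps D0" and pe: "price r T Q X = price r T Q Xs" for X
  proof -
    have Xp: "X \<in> payoffs Q" using X by (simp add: rce_feasible_def)
    have Xm[measurable]: "X \<in> borel_measurable borel" and Xnn: "\<And>x. x > 0 \<Longrightarrow> 0 \<le> X x"
      using Xp by (auto simp: payoffs_def)
    have "integral\<^sup>L Q X = integral\<^sup>L Q Xs" using pe unfolding price_def by simp
    then have eqnn: "(\<integral>\<^sup>+x. ennreal (X x) \<partial>Q) = (\<integral>\<^sup>+x. ennreal (Xs x) \<partial>Q)"
      using nnQ[OF Xp] nnQ[OF Xspay] by simp
    define fA where "fA = (\<lambda>t. indicator {0<..} t * H X (bt t))"
    define fB where "fB = (\<lambda>t. indicator {0<..} t * H Xs (bt t))"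
    have fAm[measurable]: "fA \<in> borel_measurable lborel" unfolding fA_def by (rule LC(2)[OF Xp])
    have fBm[measurable]: "fB \<in> borel_measurable lborel" unfolding fB_def by (rule LC(2)[OF Xspay])
    have fBA: "fB t \<le> fA t" for t unfolding fA_def fB_def by (intro mult_left_mono Hle[OF X]) auto
    have intAB: "integral\<^sup>N lborel fA = integral\<^sup>N lborel fB"
      using eqnn LC(1)[OF Xp] LC(1)[OF Xspay] by (simp add: fA_def fB_def)
    have "integral\<^sup>N lborel fB = ennreal (integral\<^sup>L Q Xs)"
      using LC(1)[OF Xspay] nnQ[OF Xspay] by (simp add: fB_def)
    then have finB: "integral\<^sup>N lborel fB \<noteq> \<infinity>" by simp
    have "(\<integral>\<^sup>+t. fA t - fB t \<partial>lborel) = integral\<^sup>N lborel fA - integral\<^sup>N lborel fB"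
      by (rule nn_integral_diff[OF fAm fBm finB]) (simp add: fBA)
    also have "\<dots> = 0" using intAB finB by (simp add: ennreal_diff_self)
    finally have "AE t in lborel. fA t - fB t = 0"
      by (subst (asm) nn_integral_0_iff_AE) auto
    then have AEt: "AE t in lborel. fA t = fB t"
      by eventually_elim (use fBA in \<open>auto dest: ennreal_minus_eq_0 intro: antisym\<close>)
    have Hzero: "H Y b = 0" if "b \<le> 0" for Y b
    proof -
      have "AE x in Pstar. ennreal (Y x) * indicator {..<b} x = 0"
        using Ppos by eventually_elim (use that in auto)
      then show ?thesis unfolding H_def by (subst nn_integral_cong_AE[where v="\<lambda>_. 0"]) auto
    qed
    have Hmono: "H Y b1 \<le> H Y b2" if "b1 \<le> b2" for Y b1 b2
      unfolding H_def using that by (intro nn_integral_mono mult_left_mono) (auto split: split_indicator)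
    have Hge: "H X b \<le> H Xs b" for b
    proof (cases "b \<le> 0")
      case True
      then show ?thesis using Hzero by simp
    next
      case False
      then have bpos: "b > 0" by simp
      have inc: "incseq (\<lambda>n x. ennreal (X x) * indicator {..< b - 1 / real (Suc n)} x)"
      proof (rule incseq_SucI, rule le_funI)
        fix n x
        have "1 / real (Suc (Suc n)) \<le> 1 / real (Suc n)" by (rule divide_left_mono) auto
        then have sub: "{..< b - 1/real (Suc n)} \<subseteq> {..< b - 1/real (Suc (Suc n))}" by auto
        have "indicator {..< b - 1/real (Suc n)} x \<le> (indicator {..< b - 1/real (Suc (Suc n))} x :: ennreal)"
          using subsetD[OF sub, of x] by (auto split: split_indicator)
        then show "ennreal (X x) * indicator {..< b - 1/real (Suc n)} x \<le> ennreal (X x) * indicator {..< b - 1/real (Suc (Suc n))} x"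
          by (rule mult_left_mono) simp
      qed
      have "H X b = (\<integral>\<^sup>+x. (SUP n. ennreal (X x) * indicator {..< b - 1 / real (Suc n)} x) \<partial>Pstar)"
        unfolding H_def
        by (intro nn_integral_cong) (simp only: SUP_mult_left_ennreal[symmetric] SUP_indicator_approx)
      also have "\<dots> = (SUP n. H X (b - 1 / real (Suc n)))"
        unfolding H_def by (rule nn_integral_monotone_convergence_SUP[OF inc]) simp
      also have "\<dots> \<le> H Xs b"
      proof (rule SUP_least)
        fix n :: nat
        define \<beta> where "\<beta> = b - 1 / real (Suc n)"
        show "H X (b - 1 / real (Suc n)) \<le> H Xs b"
        proof (cases "\<beta> \<le> 0")
          case True
          then show ?thesis using Hzero \<beta>_def by simp
        next
          case False
          then have \<beta>pos: "\<beta> > 0" by simp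
          have \<beta>b: "\<beta> < b" unfolding \<beta>_def by simp
          define t1 where "t1 = 1 / (C * b powr a)"
          define t2 where "t2 = 1 / (C * \<beta> powr a)"
          have t1pos: "t1 > 0" unfolding t1_def using Cpos bpos by simp
          have "\<beta> powr a < b powr a" using \<beta>pos \<beta>b apos by (intro powr_less_mono2) auto
          then have t12: "t1 < t2" unfolding t1_def t2_def using Cpos \<beta>pos bpos
            by (intro divide_strict_left_mono mult_strict_left_mono) (auto intro!: mult_pos_pos)
          obtain t where t: "t1 < t" "t < t2" "fA t = fB t" using AE_exists_in_interval[OF AEt t12] by auto
          have tpos: "t > 0" using t t1pos by simp
          have eqt: "H X (bt t) = H Xs (bt t)" using t(3) tpos by (simp add: fA_def fB_def)
          have "\<beta> < bt t" unfolding bt_def using layer_arith[OF tpos \<beta>pos Cpos apos] t(2) t2_def by simp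
          moreover have "bt t \<le> b" unfolding bt_def using layer_arith[OF tpos bpos Cpos apos] t(1) t1_def by auto
          ultimately show ?thesis
            using Hmono[of \<beta> "bt t" X] Hmono[of "bt t" b Xs] eqt \<beta>_def by simp
        qed
      qed
      finally show ?thesis .
    qed
    have Heq: "H X b = H Xs b" for b using Hge[of b] Hle[OF X, of b] by simp
    have intXs1: "integrable Pstar (\<lambda>x. 1 + (Xs x)^2)" by (intro Bochner_Integration.integrable_add intXs2) simp
    have Hfin: "H Xs b < \<infinity>" for b
    proof -
      have "H Xs b \<le> (\<integral>\<^sup>+x. ennreal (1 + (Xs x)^2) \<partial>Pstar)"
        unfolding H_def
      proof (rule nn_integral_mono)
        fix x
        have "Xs x \<le> 1 + (Xs x)^2"
        proof (cases "Xs x \<le> 1")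
          case True
          then show ?thesis using zero_le_power2[of "Xs x"] by linarith
        next
          case False
          then have "Xs x * 1 \<le> Xs x * Xs x" by (intro mult_left_mono) auto
          then show ?thesis by (simp add: power2_eq_square)
        qed
        then have e: "ennreal (Xs x) \<le> ennreal (1 + (Xs x)^2)" by (rule ennreal_leI)
        show "ennreal (Xs x) * indicator {..<b} x \<le> ennreal (1 + (Xs x)^2)"
        proof (cases "x < b")
          case True
          then show ?thesis using e by simp
        qed simp
      qed
      also have "\<dots> = ennreal (\<integral>x. 1 + (Xs x)^2 \<partial>Pstar)"
        by (rule nn_integral_eq_integral[OF intXs1]) auto
      finally show ?thesis by (simp add: le_less_trans)
    qed
    have "AE x in Pstar. ennreal (X x) = ennreal (Xs x)"
      using Heq Hfin unfolding H_def by (rule density_eq_from_Iio[OF Pd Xm Xsm])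
    then show ?thesis using Ppos by eventually_elim (metis Xnn Xsnn ennreal_inj)
  qed
  have XsE: "Xs = (\<lambda>x. quantile (cdf D0) (cdf Pstar x))" by (simp add: Xs_def q_def F_def)
  show ?thesis
    unfolding rce_unique_solution_def XsE[symmetric]
  proof (intro conjI ballI impI)
    show "Xs \<in> rce_feasible F_SSD Q Ps D0" by (rule Xsfeas)
    fix X assume X: "X \<in> rce_feasible F_SSD Q Ps D0"
    show "price r T Q Xs \<le> price r T Q X" by (rule opt[OF X])
    assume "price r T Q X = price r T Q Xs"
    then show "AE x in Pstar. X x = Xs x" by (rule uniq[OF X])
  qed
qed


lemma model_LN:
  assumes "T > 0" "sg > 0"
  shows "model_measure S0 T mu sg = LN (ln S0 + (mu - sg^2/2)*T) (sg * sqrt T)"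
proof -
  have "sg^2 * T = (sg * sqrt T)^2" using assms by (simp add: power_mult_distrib)
  then show ?thesis unfolding model_measure_def using assms
    by (simp only:) (rule lognormal_eq, simp)
qed

lemma model_mean:
  assumes "T > 0"
  shows "ln S0 + (mu - sg^2/2)*T + (sg * sqrt T)^2/2 = ln S0 + mu * T"
  using assms by (simp add: power_mult_distrib algebra_simps)

lemma model_ssd:
  assumes T: "T > 0" and sg: "0 < sg" "sg \<le> s" and mu: "mu1 \<le> mu"
    and gm: "g \<in> borel_measurable borel" "mono_on {0<..} g" "concave_on {0<..} g"
    and i1: "integrable (model_measure S0 T mu1 s) g" and i2: "integrable (model_measure S0 T mu sg) g"
  shows "integral\<^sup>L (model_measure S0 T mu1 s) g \<le> integral\<^sup>L (model_measure S0 T mu sg) g"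
proof -
  have s: "s > 0" using sg by simp
  have st: "sg * sqrt T \<le> s * sqrt T" using sg T by (intro mult_right_mono) auto
  show ?thesis
    using i1 i2 unfolding model_LN[OF T s] model_LN[OF T sg(1)]
    by (intro ssd_LN[OF _ _ st _ gm(2,3,1)])
       (use T sg s model_mean[OF T, of S0 mu1 s] model_mean[OF T, of S0 mu sg] mu
          in \<open>auto intro: mult_right_mono\<close>)
qed

lemma model_preceq:
  assumes T: "T > 0" and sg: "0 < sg" "sg \<le> s" and mu: "mu1 \<le> mu"
    and hm: "h \<in> borel_measurable borel" "mono_on {0<..} h" "concave_on {0<..} h" "\<And>x. x > 0 \<Longrightarrow> h x \<ge> 0"
  shows "preceq F_SSD (distr (model_measure S0 T mu1 s) borel h) (distr (model_measure S0 T mu sg) borel h)"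
proof -
  have s: "s > 0" using sg by simp
  have st: "sg * sqrt T \<le> s * sqrt T" using sg T by (intro mult_right_mono) auto
  show ?thesis
    unfolding model_LN[OF T s] model_LN[OF T sg(1)]
    by (rule preceq_LN_comp[OF _ _ st _ hm])
       (use T sg s model_mean[OF T, of S0 mu1 s] model_mean[OF T, of S0 mu sg] mu
          in \<open>auto intro: mult_right_mono\<close>)
qed


context
  fixes \<sigma> mQ mP a C :: real
  assumes \<sigma>: "\<sigma> > 0" and a_def: "a = (mP - mQ)/\<sigma>^2" and C_def: "C = exp (- (mP^2 - mQ^2)/(2*\<sigma>^2))"
begin

lemma Cpos: "C > 0" unfolding C_def by simp

lemma ratio_PQ: "x > 0 \<Longrightarrow> normal_density mP \<sigma> (ln x) / normal_density mQ \<sigma> (ln x) = C * x powr a"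
  unfolding a_def C_def by (rule ratio_same_sigma[OF \<sigma>])

lemma ratio_QP: "x > 0 \<Longrightarrow> normal_density mQ \<sigma> (ln x) / normal_density mP \<sigma> (ln x) = 1 / (C * x powr a)"
proof -
  assume x: "x > 0"
  have "normal_density mQ \<sigma> (ln x) / normal_density mP \<sigma> (ln x) = 1 / (normal_density mP \<sigma> (ln x) / normal_density mQ \<sigma> (ln x))"
    by simp
  then show ?thesis using ratio_PQ[OF x] by simp
qed

lemma dens_PQ: "LN mP \<sigma> = density (LN mQ \<sigma>) (\<lambda>x. ennreal (C * x powr a))"
proof -
  have "LN mP \<sigma> = density (LN mQ \<sigma>) (\<lambda>x. ennreal (normal_density mP \<sigma> (ln x) / normal_density mQ \<sigma> (ln x)))"
    by (rule LN_ratio[OF \<sigma> \<sigma>])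
  also have "\<dots> = density (LN mQ \<sigma>) (\<lambda>x. ennreal (C * x powr a))"
    by (rule density_cong) (use LN_AE_pos[of mQ \<sigma>] ratio_PQ in \<open>auto elim!: eventually_mono\<close>)
  finally show ?thesis .
qed

lemma dens_QP: "LN mQ \<sigma> = density (LN mP \<sigma>) (\<lambda>x. ennreal (1 / (C * x powr a)))"
proof -
  have "LN mQ \<sigma> = density (LN mP \<sigma>) (\<lambda>x. ennreal (normal_density mQ \<sigma> (ln x) / normal_density mP \<sigma> (ln x)))"
    by (rule LN_ratio[OF \<sigma> \<sigma>])
  also have "\<dots> = density (LN mP \<sigma>) (\<lambda>x. ennreal (1 / (C * x powr a)))"
    by (rule density_cong) (use LN_AE_pos[of mP \<sigma>] ratio_QP in \<open>auto elim!: eventually_mono\<close>)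
  finally show ?thesis .
qed

lemma lr_AE_Q: "AE x in LN mQ \<sigma>. lr (LN mQ \<sigma>) (LN mP \<sigma>) x = C * x powr a"
proof -
  interpret Q: prob_space "LN mQ \<sigma>" by (rule LN_prob[OF \<sigma>])
  have "AE x in LN mQ \<sigma>. ennreal (C * x powr a) = RN_deriv (LN mQ \<sigma>) (LN mP \<sigma>) x"
    by (rule Q.RN_deriv_unique) (auto simp: dens_PQ[symmetric])
  then show ?thesis
    by eventually_elim (metis enn2real_ennreal lr_def Cpos less_imp_le powr_ge_zero mult_nonneg_nonneg)
qed

lemma AE_Q_transfer:
  assumes "AE x in LN mQ \<sigma>. P x" "\<tau> > 0"
  shows "AE x in LN m \<tau>. P x"
proof -
  have eq: "LN m \<tau> = density (LN mQ \<sigma>) (\<lambda>x. ennreal (normal_density m \<tau> (ln x) / normal_density mQ \<sigma> (ln x)))"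
    by (rule LN_ratio[OF \<sigma> assms(2)])
  have "AE x in density (LN mQ \<sigma>) (\<lambda>x. ennreal (normal_density m \<tau> (ln x) / normal_density mQ \<sigma> (ln x))). P x"
    using assms(1) by (subst AE_density) (auto elim: eventually_mono)
  then show ?thesis by (simp only: eq[symmetric])
qed

end

theorem mainTheorem6:
  fixes T r S0 s sigma1 mu1 mu2 :: real
  assumes "T > 0" and "S0 > 0" and "s > 0" and "0 < sigma1" and "sigma1 \<le> s"
    and "r < mu1" and "mu1 < mu2"
    and "0 < (mu1 - r) / s\<^sup>2" and "(mu1 - r) / s\<^sup>2 \<le> 1"
  shows
    "(\<forall>mu sg. mu1 \<le> mu \<and> mu \<le> mu2 \<and> sigma1 \<le> sg \<and> sg \<le> s \<longrightarrow>
        preceq F_SSD (law (model_measure S0 T mu1 s) (\<lambda>x. x))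
                     (law (model_measure S0 T mu sg) (\<lambda>x. x)))
     \<and> least_favorable F_SSD (model_measure S0 T r s) (model_set S0 T mu1 mu2 sigma1 s)
         (model_measure S0 T mu1 s)
     \<and> continuous_on UNIV
         (cdf (law (model_measure S0 T mu1 s) (lr (model_measure S0 T r s) (model_measure S0 T mu1 s))))
     \<and> integrable (model_measure S0 T mu1 s)
         (\<lambda>x. 1 / lr (model_measure S0 T r s) (model_measure S0 T mu1 s) x)
     \<and> integrable (model_measure S0 T mu1 s)
         (\<lambda>x. (1 / lr (model_measure S0 T r s) (model_measure S0 T mu1 s) x)\<^sup>2)
     \<and> (\<forall>D0. real_distribution D0
          \<and> (\<forall>x<0. cdf D0 x = 0)
          \<and> (\<integral>\<^sup>+ u\<in>{0<..<1}. ennreal ((quantile (cdf D0) u)\<^sup>2) \<partial>lborel) < \<infinity>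
          \<and> concave_on {0<..}
              (\<lambda>x. quantile (cdf D0)
                 (cdf (law (model_measure S0 T mu1 s)
                        (lr (model_measure S0 T r s) (model_measure S0 T mu1 s))) x))
        \<longrightarrow> rce_unique_solution F_SSD r T (model_measure S0 T r s) (model_set S0 T mu1 mu2 sigma1 s)
              D0 (model_measure S0 T mu1 s)
              (\<lambda>x. quantile (cdf D0) (cdf (law (model_measure S0 T mu1 s) (\<lambda>y. y)) x)))"
  proof -
  have Tpos: "T > 0" and s: "s > 0" using assms by auto
  define \<sigma> where "\<sigma> = s * sqrt T"
  define mQ where "mQ = ln S0 + (r - s^2/2)*T"
  define mP where "mP = ln S0 + (mu1 - s^2/2)*T"
  define a where "a = (mP - mQ)/\<sigma>^2"
  define C where "C = exp (- (mP^2 - mQ^2)/(2*\<sigma>^2))"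
  have \<sigma>pos: "\<sigma> > 0" unfolding \<sigma>_def using Tpos s by simp
  have a_eq: "a = (mu1 - r)/s^2"
  proof -
    have "mP - mQ = (mu1 - r) * T" unfolding mP_def mQ_def by (simp add: algebra_simps)
    moreover have "\<sigma>^2 = s^2 * T" unfolding \<sigma>_def using Tpos by (simp add: power_mult_distrib)
    ultimately show ?thesis unfolding a_def using Tpos by simp
  qed
  have apos: "0 < a" and a1: "a \<le> 1" using assms a_eq by auto
  have Cpos: "C > 0" unfolding C_def by simp
  have Qeq: "model_measure S0 T r s = LN mQ \<sigma>" unfolding mQ_def \<sigma>_def by (rule model_LN[OF Tpos s])
  have Peq: "model_measure S0 T mu1 s = LN mP \<sigma>" unfolding mP_def \<sigma>_def by (rule model_LN[OF Tpos s])
  define ell where "ell = (\<lambda>x::real. C * x powr a)"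
  have ellm[measurable]: "ell \<in> borel_measurable borel" unfolding ell_def by measurable
  have ellnn: "\<And>x. x > 0 \<Longrightarrow> 0 \<le> ell x" unfolding ell_def using Cpos by simp
  have ellmono: "mono_on {0<..} ell" unfolding ell_def
    by (rule mono_onI) (use Cpos apos in \<open>auto intro!: mult_left_mono powr_mono2\<close>)
  have ellc: "concave_on {0<..} ell"
    unfolding ell_def using concave_powr[OF apos a1] Cpos by (intro concave_on_cmul) auto
  have ellinj: "\<And>x y. x > 0 \<Longrightarrow> y > 0 \<Longrightarrow> ell x = ell y \<Longrightarrow> x = y"
  proof -
    fix x y :: real assume xy: "x > 0" "y > 0" "ell x = ell y"
    then have "x powr a = y powr a" unfolding ell_def using Cpos by simp
    then have "(x powr a) powr (1/a) = (y powr a) powr (1/a)" by simp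
    then show "x = y" using xy apos by (simp add: powr_powr)
  qed
  have lrm[measurable]: "lr (LN mQ \<sigma>) (LN mP \<sigma>) \<in> borel_measurable borel"
  proof -
    have "RN_deriv (LN mQ \<sigma>) (LN mP \<sigma>) \<in> borel_measurable borel"
      using borel_measurable_RN_deriv[of "LN mQ \<sigma>" "LN mP \<sigma>"] by simp
    then show ?thesis unfolding lr_def by measurable
  qed
  have lrAE: "AE x in LN m \<tau>. lr (LN mQ \<sigma>) (LN mP \<sigma>) x = ell x" if "\<tau> > 0" for m \<tau>
    unfolding ell_def by (rule AE_Q_transfer[OF \<sigma>pos a_def C_def lr_AE_Q[OF \<sigma>pos a_def C_def] that])
  have lawlr: "law (LN m \<tau>) (lr (LN mQ \<sigma>) (LN mP \<sigma>)) = distr (LN m \<tau>) borel ell" if "\<tau> > 0" for m \<tau>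
    unfolding law_def by (rule distr_cong_AE) (use lrAE[OF that] in auto)
  have setE: "\<exists>mu sg. P = model_measure S0 T mu sg \<and> mu1 \<le> mu \<and> mu \<le> mu2 \<and> sigma1 \<le> sg \<and> sg \<le> s"
    if "P \<in> model_set S0 T mu1 mu2 sigma1 s" for P
    using that unfolding model_set_def by auto
  have Pin: "model_measure S0 T mu1 s \<in> model_set S0 T mu1 mu2 sigma1 s"
  proof -
    have "model_measure S0 T mu1 s = model_measure S0 T mu1 s \<and> mu1 \<le> mu1 \<and> mu1 \<le> mu2 \<and> sigma1 \<le> s \<and> s \<le> s"
      using assms by simp
    then show ?thesis unfolding model_set_def by blast
  qed
  have part1: "\<forall>mu sg. mu1 \<le> mu \<and> mu \<le> mu2 \<and> sigma1 \<le> sg \<and> sg \<le> s \<longrightarrow>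
        preceq F_SSD (law (model_measure S0 T mu1 s) (\<lambda>x. x)) (law (model_measure S0 T mu sg) (\<lambda>x. x))"
  proof (intro allI impI, elim conjE)
    fix mu sg assume h: "mu1 \<le> mu" "mu \<le> mu2" "sigma1 \<le> sg" "sg \<le> s"
    have sg: "sg > 0" using h assms by simp
    show "preceq F_SSD (law (model_measure S0 T mu1 s) (\<lambda>x. x)) (law (model_measure S0 T mu sg) (\<lambda>x. x))"
      unfolding law_def
      by (rule model_preceq[OF Tpos sg h(4) h(1)]) (auto intro: mono_onI simp: concave_on_ident)
  qed
  have part2: "least_favorable F_SSD (model_measure S0 T r s) (model_set S0 T mu1 mu2 sigma1 s) (model_measure S0 T mu1 s)"
    unfolding least_favorable_def
  proof (intro conjI ballI Pin)
    fix P assume "P \<in> model_set S0 T mu1 mu2 sigma1 s"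
    then obtain mu sg where P: "P = model_measure S0 T mu sg" and h: "mu1 \<le> mu" "mu \<le> mu2" "sigma1 \<le> sg" "sg \<le> s"
      using setE by blast
    have sg: "sg > 0" using h assms by simp
    have "preceq F_SSD (distr (model_measure S0 T mu1 s) borel ell) (distr (model_measure S0 T mu sg) borel ell)"
      by (rule model_preceq[OF Tpos sg h(4) h(1) ellm ellmono ellc ellnn])
    moreover have "law (model_measure S0 T mu1 s) (lr (model_measure S0 T r s) (model_measure S0 T mu1 s))
        = distr (model_measure S0 T mu1 s) borel ell"
      unfolding Qeq Peq by (rule lawlr[OF \<sigma>pos])
    moreover have "law (model_measure S0 T mu sg) (lr (model_measure S0 T r s) (model_measure S0 T mu1 s))
        = distr (model_measure S0 T mu sg) borel ell"
      unfolding Qeq Peq model_LN[OF Tpos sg] by (rule lawlr) (use sg Tpos in simp)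
    ultimately show "preceq F_SSD (law (model_measure S0 T mu1 s) (lr (model_measure S0 T r s) (model_measure S0 T mu1 s)))
        (law P (lr (model_measure S0 T r s) (model_measure S0 T mu1 s)))"
      using P by simp
  qed
  have lawP: "law (LN mP \<sigma>) (lr (LN mQ \<sigma>) (LN mP \<sigma>)) = distr (LN mP \<sigma>) borel ell" by (rule lawlr[OF \<sigma>pos])
  have part3: "continuous_on UNIV (cdf (law (LN mP \<sigma>) (lr (LN mQ \<sigma>) (LN mP \<sigma>))))"
    unfolding lawP by (rule cdf_distr_LN_continuous[OF \<sigma>pos ellm ellinj])
  have invl: "AE x in LN mP \<sigma>. 1 / lr (LN mQ \<sigma>) (LN mP \<sigma>) x = (1/C) * exp ((-a) * ln x)"
    using lrAE[OF \<sigma>pos, of mP] LN_AE_pos[of mP \<sigma>]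
  proof eventually_elim
    case (elim x)
    then show ?case unfolding ell_def using Cpos by (simp add: powr_def exp_minus field_simps)
  qed
  have invZ: "AE x in LN mP \<sigma>. 1 / (C * x powr a) = (1/C) * exp ((-a) * ln x)"
    using LN_AE_pos[of mP \<sigma>] by eventually_elim (use Cpos in \<open>simp add: powr_def exp_minus field_simps\<close>)
  have i1: "integrable (LN mP \<sigma>) (\<lambda>x. (1/C) * exp ((-a) * ln x))"
    using LN_exp_ln_integrable[OF \<sigma>pos, of mP "-a"] by simp
  have i2: "integrable (LN mP \<sigma>) (\<lambda>x. (1/C)^2 * exp ((-2*a) * ln x))"
    using LN_exp_ln_integrable[OF \<sigma>pos, of mP "-2*a"] by simp
  have sq: "((1/C) * exp ((-a) * ln x))^2 = (1/C)^2 * exp ((-2*a) * ln x)" for x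
    by (simp add: power_mult_distrib power2_eq_square exp_add[symmetric] algebra_simps)
  have part4: "integrable (LN mP \<sigma>) (\<lambda>x. 1 / lr (LN mQ \<sigma>) (LN mP \<sigma>) x)"
    by (rule integrable_cong_AE[THEN iffD2, OF _ _ invl i1]) auto
  have invl2: "AE x in LN mP \<sigma>. (1 / lr (LN mQ \<sigma>) (LN mP \<sigma>) x)^2 = (1/C)^2 * exp ((-2*a) * ln x)"
    using invl by eventually_elim (metis sq)
  have invZ2: "AE x in LN mP \<sigma>. (1 / (C * x powr a))^2 = (1/C)^2 * exp ((-2*a) * ln x)"
    using invZ by eventually_elim (metis sq)
  have part5: "integrable (LN mP \<sigma>) (\<lambda>x. (1 / lr (LN mQ \<sigma>) (LN mP \<sigma>) x)^2)"
    by (rule integrable_cong_AE[THEN iffD2, OF _ _ invl2 i2]) auto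
  have Z2: "integrable (LN mP \<sigma>) (\<lambda>x. (1 / (C * x powr a))^2)"
    by (rule integrable_cong_AE[THEN iffD2, OF _ _ invZ2 i2]) auto
  have part6: "\<forall>D0. real_distribution D0
          \<and> (\<forall>x<0. cdf D0 x = 0)
          \<and> (\<integral>\<^sup>+ u\<in>{0<..<1}. ennreal ((quantile (cdf D0) u)\<^sup>2) \<partial>lborel) < \<infinity>
          \<and> concave_on {0<..}
              (\<lambda>x. quantile (cdf D0)
                 (cdf (law (model_measure S0 T mu1 s)
                        (lr (model_measure S0 T r s) (model_measure S0 T mu1 s))) x))
        \<longrightarrow> rce_unique_solution F_SSD r T (model_measure S0 T r s) (model_set S0 T mu1 mu2 sigma1 s)
              D0 (model_measure S0 T mu1 s)
              (\<lambda>x. quantile (cdf D0) (cdf (law (model_measure S0 T mu1 s) (\<lambda>y. y)) x))"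
  proof (intro allI impI, elim conjE)
    fix D0 :: "real measure"
    assume D0d: "real_distribution D0" and D0neg: "\<forall>x<0. cdf D0 x = 0"
      and D0sq: "(\<integral>\<^sup>+ u\<in>{0<..<1}. ennreal ((quantile (cdf D0) u)\<^sup>2) \<partial>lborel) < \<infinity>"
      and D0cc: "concave_on {0<..} (\<lambda>x. quantile (cdf D0)
                 (cdf (law (model_measure S0 T mu1 s) (lr (model_measure S0 T r s) (model_measure S0 T mu1 s))) x))"
    have lawid: "law (LN mP \<sigma>) (\<lambda>y. y) = LN mP \<sigma>" unfolding law_def by (rule distr_id2) simp
    have Pcont: "continuous_on UNIV (cdf (LN mP \<sigma>))"
      using cdf_distr_LN_continuous[OF \<sigma>pos, of "\<lambda>x. x" mP] by (simp add: distr_id2)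
    show "rce_unique_solution F_SSD r T (model_measure S0 T r s) (model_set S0 T mu1 mu2 sigma1 s)
              D0 (model_measure S0 T mu1 s)
              (\<lambda>x. quantile (cdf D0) (cdf (law (model_measure S0 T mu1 s) (\<lambda>y. y)) x))"
      unfolding Qeq Peq lawid
    proof (rule rce_abstract[where C=C and a=a])
      show "real_distribution (LN mP \<sigma>)" by (rule LN_real_distribution[OF \<sigma>pos])
      show "AE x in LN mP \<sigma>. x > 0" by (rule LN_AE_pos)
      show "continuous_on UNIV (cdf (LN mP \<sigma>))" by (rule Pcont)
      show "\<And>x. x > 0 \<Longrightarrow> 0 < cdf (LN mP \<sigma>) x \<and> cdf (LN mP \<sigma>) x < 1"
        using LN_cdf_bounds[OF \<sigma>pos] by blast
      show "C > 0" "0 < a" "a \<le> 1" by (fact Cpos apos a1)+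
      show "LN mQ \<sigma> = density (LN mP \<sigma>) (\<lambda>x. ennreal (1 / (C * x powr a)))"
        by (rule dens_QP[OF \<sigma>pos a_def C_def])
      show "integrable (LN mP \<sigma>) (\<lambda>x. (1 / (C * x powr a))^2)" by (rule Z2)
      show "LN mP \<sigma> \<in> model_set S0 T mu1 mu2 sigma1 s" using Pin Peq by simp
      show "\<And>P. P \<in> model_set S0 T mu1 mu2 sigma1 s \<Longrightarrow> sets P = sets borel"
      proof -
        fix P assume "P \<in> model_set S0 T mu1 mu2 sigma1 s"
        then obtain mu sg where P: "P = model_measure S0 T mu sg" and h: "sigma1 \<le> sg"
          using setE by blast
        have sg: "sg > 0" using h assms by simp
        show "sets P = sets borel" unfolding P model_LN[OF Tpos sg] by simp
      qed
      show "\<And>P g. P \<in> model_set S0 T mu1 mu2 sigma1 s \<Longrightarrow> g \<in> borel_measurable borel \<Longrightarrow> mono_on {0<..} g \<Longrightarrow>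
        concave_on {0<..} g \<Longrightarrow> integrable (LN mP \<sigma>) g \<Longrightarrow> integrable P g \<Longrightarrow> integral\<^sup>L (LN mP \<sigma>) g \<le> integral\<^sup>L P g"
      proof -
        fix P g assume PP: "P \<in> model_set S0 T mu1 mu2 sigma1 s" and g: "g \<in> borel_measurable borel" "mono_on {0<..} g"
          "concave_on {0<..} g" and ig: "integrable (LN mP \<sigma>) g" "integrable P g"
        obtain mu sg where P: "P = model_measure S0 T mu sg" and h: "mu1 \<le> mu" "mu \<le> mu2" "sigma1 \<le> sg" "sg \<le> s"
          using setE[OF PP] by blast
        have sg: "sg > 0" using h assms by simp
        show "integral\<^sup>L (LN mP \<sigma>) g \<le> integral\<^sup>L P g"
          unfolding P Peq[symmetric]
          by (rule model_ssd[OF Tpos sg h(4) h(1) g]) (use ig P Peq in auto)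
      qed
      show "real_distribution D0" by (rule D0d)
      show "\<And>x. x < 0 \<Longrightarrow> cdf D0 x = 0" using D0neg by blast
      show "(\<integral>\<^sup>+ u\<in>{0<..<1}. ennreal ((quantile (cdf D0) u)\<^sup>2) \<partial>lborel) < \<infinity>" by (rule D0sq)
      show "concave_on {0<..} (\<lambda>x. quantile (cdf D0) (cdf (distr (LN mP \<sigma>) borel (\<lambda>x. C * x powr a)) x))"
        using D0cc unfolding Qeq Peq lawP ell_def .
    qed
  qed
  show ?thesis
    using part1 part2 part3 part4 part5 part6 unfolding Qeq Peq by blast
qed


end
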